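(* Let $\mathcal{A}$ be an $n$-dimensional Hopf algebra over $\mathbb{C}$ (coproduct $\Delta$, counit $\varepsilon$, antipode $S$) with $S^2=\mathrm{id}$, let $\Pi_\phi$ be a representation of $\mathcal{A}$ on $V$ and $|\phi_r\rangle\in V$. Define $\mathcal{T}_r=\{a\in\mathcal{A}:(\mathrm{id}\otimes\Pi_\phi)\Delta(a)(1\otimes|\phi_r\rangle)=a\otimes|\phi_r\rangle\}$, $\mathcal{T}_l=\{a\in\mathcal{A}:(\Pi_\phi\otimes\mathrm{id})\Delta(a)(|\phi_r\rangle\otimes1)=|\phi_r\rangle\otimes a\}$, and let $\mathcal{T}$ be the largest Hopf subalgebra of $\mathcal{A}$ all of whose elements $a$ satisfy $\Pi_\phi(a)|\phi_r\rangle=\varepsilon(a)|\phi_r\rangle$. Then the following are equivalent: (1) $\mathcal{T}_r=\mathcal{T}_l$; (2) $\mathcal{T}_r$ is a Hopf subalgebra of $\mathcal{A}$; (3) $\mathcal{T}_r=\mathcal{T}$; (4) $\mathcal{T}_l\subseteq\mathcal{T}_r$.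
   Context: With $\Delta(a)=\sum a^{(1)}\otimes a^{(2)}$, $(\mathrm{id}\otimes\Pi_\phi)\Delta(a)(1\otimes|\phi_r\rangle)=\sum a^{(1)}\otimes\Pi_\phi(a^{(2)})|\phi_r\rangle\in\mathcal{A}\otimes V$ and $(\Pi_\phi\otimes\mathrm{id})\Delta(a)(|\phi_r\rangle\otimes1)=\sum \Pi_\phi(a^{(1)})|\phi_r\rangle\otimes a^{(2)}\in V\otimes\mathcal{A}$. A Hopf subalgebra is a subalgebra containing $1$, with $\Delta$ mapping it into its tensor square and $S$ mapping it into itself. *)

theory Defs
  imports Complex_Main
begin

text \<open>A finite-dimensional complex algebra A with basis indexed by the finite type 'n
  (so dim A = CARD('n)); elements of A are coordinate vectors 'n \<Rightarrow> complex.
  Elements of A \<otimes> A are 'n \<times> 'n \<Rightarrow> complex, elements of A \<otimes> A \<otimes> A are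
  'n \<times> 'n \<times> 'n \<Rightarrow> complex. The structure maps are given by structure constants
  w.r.t. the basis e_i:
    e_i e_j = \<Sum>_k mul i j k e_k,  1 = \<Sum>_k unit k e_k,
    \<Delta>(e_k) = \<Sum>_{i,j} comul k i j e_i \<otimes> e_j,  \<epsilon>(e_k) = counit k,
    S(e_k) = \<Sum>_j antip k j e_j.\<close>

record 'n hopf_data =
  hmul :: "'n \<Rightarrow> 'n \<Rightarrow> 'n \<Rightarrow> complex"
  hunit :: "'n \<Rightarrow> complex"
  hcomul :: "'n \<Rightarrow> 'n \<Rightarrow> 'n \<Rightarrow> complex"
  hcounit :: "'n \<Rightarrow> complex"
  hantip :: "'n \<Rightarrow> 'n \<Rightarrow> complex"

definition bas :: "'n \<Rightarrow> 'n \<Rightarrow> complex" where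
  "bas i = (\<lambda>j. if i = j then 1 else 0)"

definition amult :: "('n::finite) hopf_data \<Rightarrow> ('n \<Rightarrow> complex) \<Rightarrow> ('n \<Rightarrow> complex) \<Rightarrow> ('n \<Rightarrow> complex)" where
  "amult H a b = (\<lambda>k. \<Sum>i\<in>UNIV. \<Sum>j\<in>UNIV. a i * b j * hmul H i j k)"

definition aone :: "('n::finite) hopf_data \<Rightarrow> ('n \<Rightarrow> complex)" where
  "aone H = hunit H"

definition aDelta :: "('n::finite) hopf_data \<Rightarrow> ('n \<Rightarrow> complex) \<Rightarrow> ('n \<times> 'n \<Rightarrow> complex)" where
  "aDelta H a = (\<lambda>(i,j). \<Sum>k\<in>UNIV. a k * hcomul H k i j)"

definition aeps :: "('n::finite) hopf_data \<Rightarrow> ('n \<Rightarrow> complex) \<Rightarrow> complex" where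
  "aeps H a = (\<Sum>k\<in>UNIV. a k * hcounit H k)"

definition aS :: "('n::finite) hopf_data \<Rightarrow> ('n \<Rightarrow> complex) \<Rightarrow> ('n \<Rightarrow> complex)" where
  "aS H a = (\<lambda>j. \<Sum>k\<in>UNIV. a k * hantip H k j)"

definition tens :: "('n \<Rightarrow> complex) \<Rightarrow> ('n \<Rightarrow> complex) \<Rightarrow> ('n \<times> 'n \<Rightarrow> complex)" where
  "tens a b = (\<lambda>(i,j). a i * b j)"

text \<open>Multiplication of A \<otimes> A: (e_i \<otimes> e_j)(e_p \<otimes> e_q) = e_i e_p \<otimes> e_j e_q.\<close>
definition tmult :: "('n::finite) hopf_data \<Rightarrow> ('n \<times> 'n \<Rightarrow> complex) \<Rightarrow> ('n \<times> 'n \<Rightarrow> complex) \<Rightarrow> ('n \<times> 'n \<Rightarrow> complex)" where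
  "tmult H x y = (\<lambda>(p,q). \<Sum>i\<in>UNIV. \<Sum>j\<in>UNIV. \<Sum>i'\<in>UNIV. \<Sum>j'\<in>UNIV.
      x (i,j) * y (i',j') * hmul H i i' p * hmul H j j' q)"

definition Delta_id :: "('n::finite) hopf_data \<Rightarrow> ('n \<times> 'n \<Rightarrow> complex) \<Rightarrow> ('n \<times> 'n \<times> 'n \<Rightarrow> complex)" where
  "Delta_id H x = (\<lambda>(i,j,l). \<Sum>k\<in>UNIV. x (k,l) * hcomul H k i j)"

definition id_Delta :: "('n::finite) hopf_data \<Rightarrow> ('n \<times> 'n \<Rightarrow> complex) \<Rightarrow> ('n \<times> 'n \<times> 'n \<Rightarrow> complex)" where
  "id_Delta H x = (\<lambda>(i,j,l). \<Sum>k\<in>UNIV. x (i,k) * hcomul H k j l)"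

definition eps_id :: "('n::finite) hopf_data \<Rightarrow> ('n \<times> 'n \<Rightarrow> complex) \<Rightarrow> ('n \<Rightarrow> complex)" where
  "eps_id H x = (\<lambda>j. \<Sum>i\<in>UNIV. hcounit H i * x (i,j))"

definition id_eps :: "('n::finite) hopf_data \<Rightarrow> ('n \<times> 'n \<Rightarrow> complex) \<Rightarrow> ('n \<Rightarrow> complex)" where
  "id_eps H x = (\<lambda>i. \<Sum>j\<in>UNIV. x (i,j) * hcounit H j)"

definition mult_S_id :: "('n::finite) hopf_data \<Rightarrow> ('n \<times> 'n \<Rightarrow> complex) \<Rightarrow> ('n \<Rightarrow> complex)" where
  "mult_S_id H x = (\<lambda>k. \<Sum>i\<in>UNIV. \<Sum>j\<in>UNIV. x (i,j) * amult H (aS H (bas i)) (bas j) k)"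

definition mult_id_S :: "('n::finite) hopf_data \<Rightarrow> ('n \<times> 'n \<Rightarrow> complex) \<Rightarrow> ('n \<Rightarrow> complex)" where
  "mult_id_S H x = (\<lambda>k. \<Sum>i\<in>UNIV. \<Sum>j\<in>UNIV. x (i,j) * amult H (bas i) (aS H (bas j)) k)"

definition hopf_algebra :: "('n::finite) hopf_data \<Rightarrow> bool" where
  "hopf_algebra H \<longleftrightarrow>
     (\<forall>a b c. amult H (amult H a b) c = amult H a (amult H b c)) \<and>
     (\<forall>a. amult H (aone H) a = a \<and> amult H a (aone H) = a) \<and>
     (\<forall>a. Delta_id H (aDelta H a) = id_Delta H (aDelta H a)) \<and>
     (\<forall>a. eps_id H (aDelta H a) = a \<and> id_eps H (aDelta H a) = a) \<and>
     (\<forall>a b. aDelta H (amult H a b) = tmult H (aDelta H a) (aDelta H b)) \<and>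
     aDelta H (aone H) = tens (aone H) (aone H) \<and>
     (\<forall>a b. aeps H (amult H a b) = aeps H a * aeps H b) \<and>
     aeps H (aone H) = 1 \<and>
     (\<forall>a. mult_S_id H (aDelta H a) = (\<lambda>k. aeps H a * aone H k) \<and>
          mult_id_S H (aDelta H a) = (\<lambda>k. aeps H a * aone H k))"

text \<open>Representations of A on a complex vector space V (type 'v, scalar
  multiplication sc): given by the operators rep i = \<Pi>(e_i);
  \<Pi>(a) v = \<Sum>_i a_i \<Pi>(e_i) v.\<close>
definition Pi_rep :: "(complex \<Rightarrow> 'v \<Rightarrow> 'v) \<Rightarrow> ('n::finite \<Rightarrow> 'v \<Rightarrow> 'v) \<Rightarrow> ('n \<Rightarrow> complex) \<Rightarrow> 'v \<Rightarrow> ('v::ab_group_add)" where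
  "Pi_rep sc rep a v = (\<Sum>i\<in>UNIV. sc (a i) (rep i v))"

definition is_rep :: "('n::finite) hopf_data \<Rightarrow> (complex \<Rightarrow> 'v \<Rightarrow> 'v) \<Rightarrow> ('n \<Rightarrow> 'v \<Rightarrow> ('v::ab_group_add)) \<Rightarrow> bool" where
  "is_rep H sc rep \<longleftrightarrow>
     vector_space sc \<and>
     (\<forall>i. Vector_Spaces.linear sc sc (rep i)) \<and>
     (\<forall>v. Pi_rep sc rep (aone H) v = v) \<and>
     (\<forall>a b v. Pi_rep sc rep (amult H a b) v = Pi_rep sc rep a (Pi_rep sc rep b v))"

text \<open>Elements of A \<otimes> V and of V \<otimes> A are both identified with 'n \<Rightarrow> 'v:
  the component at i is the V-coefficient of e_i.\<close>
definition T_r :: "('n::finite) hopf_data \<Rightarrow> (complex \<Rightarrow> 'v \<Rightarrow> 'v) \<Rightarrow> ('n \<Rightarrow> 'v \<Rightarrow> ('v::ab_group_add)) \<Rightarrow> 'v \<Rightarrow> ('n \<Rightarrow> complex) set" where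
  "T_r H sc rep phi = {a. (\<lambda>i. \<Sum>j\<in>UNIV. sc (aDelta H a (i,j)) (Pi_rep sc rep (bas j) phi))
                          = (\<lambda>i. sc (a i) phi)}"

definition T_l :: "('n::finite) hopf_data \<Rightarrow> (complex \<Rightarrow> 'v \<Rightarrow> 'v) \<Rightarrow> ('n \<Rightarrow> 'v \<Rightarrow> ('v::ab_group_add)) \<Rightarrow> 'v \<Rightarrow> ('n \<Rightarrow> complex) set" where
  "T_l H sc rep phi = {a. (\<lambda>j. \<Sum>i\<in>UNIV. sc (aDelta H a (i,j)) (Pi_rep sc rep (bas i) phi))
                          = (\<lambda>j. sc (a j) phi)}"

definition tensor_sq :: "('n \<Rightarrow> complex) set \<Rightarrow> ('n \<times> 'n \<Rightarrow> complex) set" where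
  "tensor_sq B = {x. \<exists>(m::nat) c f g. (\<forall>l<m. f l \<in> B \<and> g l \<in> B) \<and>
                      x = (\<lambda>p. \<Sum>l<m. c l * tens (f l) (g l) p)}"

definition subalgebra :: "('n::finite) hopf_data \<Rightarrow> ('n \<Rightarrow> complex) set \<Rightarrow> bool" where
  "subalgebra H B \<longleftrightarrow>
     (\<lambda>_. 0) \<in> B \<and>
     (\<forall>a\<in>B. \<forall>b\<in>B. (\<lambda>i. a i + b i) \<in> B) \<and>
     (\<forall>c. \<forall>a\<in>B. (\<lambda>i. c * a i) \<in> B) \<and>
     aone H \<in> B \<and>
     (\<forall>a\<in>B. \<forall>b\<in>B. amult H a b \<in> B)"

definition hopf_subalgebra :: "('n::finite) hopf_data \<Rightarrow> ('n \<Rightarrow> complex) set \<Rightarrow> bool" where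
  "hopf_subalgebra H B \<longleftrightarrow>
     subalgebra H B \<and>
     (\<forall>a\<in>B. aDelta H a \<in> tensor_sq B) \<and>
     (\<forall>a\<in>B. aS H a \<in> B)"

definition stabilizes :: "('n::finite) hopf_data \<Rightarrow> (complex \<Rightarrow> 'v \<Rightarrow> 'v) \<Rightarrow> ('n \<Rightarrow> 'v \<Rightarrow> ('v::ab_group_add)) \<Rightarrow> 'v \<Rightarrow> ('n \<Rightarrow> complex) set \<Rightarrow> bool" where
  "stabilizes H sc rep phi B \<longleftrightarrow> (\<forall>a\<in>B. Pi_rep sc rep a phi = sc (aeps H a) phi)"

definition is_largest_stab_hopf :: "('n::finite) hopf_data \<Rightarrow> (complex \<Rightarrow> 'v \<Rightarrow> 'v) \<Rightarrow> ('n \<Rightarrow> 'v \<Rightarrow> ('v::ab_group_add)) \<Rightarrow> 'v \<Rightarrow> ('n \<Rightarrow> complex) set \<Rightarrow> bool" where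
  "is_largest_stab_hopf H sc rep phi T \<longleftrightarrow>
     hopf_subalgebra H T \<and> stabilizes H sc rep phi T \<and>
     (\<forall>B. hopf_subalgebra H B \<and> stabilizes H sc rep phi B \<longrightarrow> B \<subseteq> T)"

end

theory Submission
  imports Defs "HOL-Library.Function_Algebras"
begin

definition fsc :: "complex \<Rightarrow> ('n \<Rightarrow> complex) \<Rightarrow> ('n \<Rightarrow> complex)" where
  "fsc c f = (\<lambda>i. c * f i)"

lemma vs_fsc: "vector_space fsc"
  by unfold_locales (auto simp: fsc_def fun_eq_iff algebra_simps)

lemma vsp_fsc: "vector_space_pair fsc fsc"
  by (simp add: vector_space_pair_def vs_fsc)

lemma proj_exists:
  assumes "module.subspace fsc V"
  shows "\<exists>g. g ` UNIV \<subseteq> V \<and> Vector_Spaces.linear fsc fsc g \<and> (\<forall>v\<in>V. g v = v)"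
proof -
  have l: "Vector_Spaces.linear fsc fsc id"
    by (simp add: vector_space.linear_id vs_fsc)
  show ?thesis
    using vector_space_pair.linear_exists_left_inverse_on[OF vsp_fsc l assms] by auto
qed

lemma sum_fun_apply: "(sum h A) q = (\<Sum>a\<in>A. h a q)"
  by (induct A rule: infinite_finite_induct) auto

lemma bas_sym: "bas i j = bas j i" by (simp add: bas_def eq_commute)

lemma sum_bas_r: "(\<Sum>a\<in>UNIV. f a * bas (x::'n::finite) a) = (f x :: complex)"
proof -
  have "(\<Sum>a\<in>UNIV. f a * bas x a) = (\<Sum>a\<in>UNIV. if x = a then f a else 0)"
    by (rule sum.cong) (auto simp: bas_def)
  then show ?thesis by (simp add: sum.delta sum.delta')
qed

lemma sum_bas_l: "(\<Sum>a\<in>UNIV. bas (x::'n::finite) a * f a) = (f x :: complex)"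
  using sum_bas_r[of f x] by (simp add: mult.commute)

lemma fun_basis_expand: "(f::'n::finite \<Rightarrow> complex) = (\<Sum>j\<in>UNIV. fsc (f j) (bas j))"
  by (rule ext) (simp add: sum_fun_apply fsc_def bas_sym sum_bas_r)

lemma lin_expand:
  assumes "Vector_Spaces.linear fsc fsc g"
  shows "g (f::'n::finite \<Rightarrow> complex) q = (\<Sum>j\<in>UNIV. f j * g (bas j) q)"
proof -
  interpret module_hom fsc fsc g using assms by (simp add: module_hom_iff_linear)
  have "g f = g (\<Sum>j\<in>UNIV. fsc (f j) (bas j))" using fun_basis_expand by metis
  also have "\<dots> = (\<Sum>j\<in>UNIV. fsc (f j) (g (bas j)))" by (simp add: sum scale)
  finally show ?thesis by (simp add: sum_fun_apply fsc_def)
qed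

lemma tensor_lemma:
  fixes x :: "('n::finite) \<times> 'n \<Rightarrow> complex"
  assumes z: "(\<lambda>_. 0) \<in> B" and ad: "\<forall>a\<in>B. \<forall>b\<in>B. (\<lambda>i. a i + b i) \<in> B"
    and sc: "\<forall>c. \<forall>a\<in>B. (\<lambda>i. c * a i) \<in> B"
    and rows: "\<And>i. (\<lambda>j. x (i,j)) \<in> B" and cols: "\<And>j. (\<lambda>i. x (i,j)) \<in> B"
  shows "x \<in> tensor_sq B"
proof -
  have "module.subspace fsc B"
    unfolding module.subspace_def[OF vs_fsc[unfolded module_iff_vector_space[symmetric]]]
    using z ad sc by (auto simp: fsc_def zero_fun_def plus_fun_def)
  then obtain g where gB: "g ` UNIV \<subseteq> B" and gl: "Vector_Spaces.linear fsc fsc g"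
     and gid: "\<forall>v\<in>B. g v = v" using proj_exists by blast
  have xe: "x (p,q) = (\<Sum>ij\<in>UNIV. x ij * tens (g (bas (fst ij))) (g (bas (snd ij))) (p,q))" for p q
  proof -
    have "x (p,q) = g (\<lambda>j. x (p,j)) q" using gid rows by simp
    also have "\<dots> = (\<Sum>j\<in>UNIV. x (p,j) * g (bas j) q)" by (rule lin_expand[OF gl])
    also have "\<dots> = (\<Sum>j\<in>UNIV. g (\<lambda>i. x (i,j)) p * g (bas j) q)" using gid cols by simp
    also have "\<dots> = (\<Sum>j\<in>UNIV. (\<Sum>i\<in>UNIV. x (i,j) * g (bas i) p) * g (bas j) q)"
      using lin_expand[OF gl, of "\<lambda>i. x (i,_)" p] by (simp only:)
    also have "\<dots> = (\<Sum>j\<in>UNIV. \<Sum>i\<in>UNIV. x (i,j) * g (bas i) p * g (bas j) q)"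
      by (simp add: sum_distrib_right)
    also have "\<dots> = (\<Sum>i\<in>UNIV. \<Sum>j\<in>UNIV. x (i,j) * g (bas i) p * g (bas j) q)"
      by (rule sum.swap)
    also have "\<dots> = (\<Sum>ij\<in>UNIV. x ij * g (bas (fst ij)) p * g (bas (snd ij)) q)"
      by (simp add: sum.cartesian_product UNIV_Times_UNIV[symmetric] case_prod_beta del: UNIV_Times_UNIV)
    finally show ?thesis by (simp add: tens_def mult.assoc)
  qed
  obtain h :: "nat \<Rightarrow> 'n \<times> 'n" where h: "bij_betw h {0..<card (UNIV::('n\<times>'n) set)} UNIV"
    using ex_bij_betw_nat_finite[OF finite_class.finite_UNIV] by blast
  define m where "m = card (UNIV::('n\<times>'n) set)"
  have "x = (\<lambda>pq. \<Sum>l<m. x (h l) * tens (g (bas (fst (h l)))) (g (bas (snd (h l)))) pq)"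
  proof
    fix pq :: "'n \<times> 'n"
    obtain p q where pq: "pq = (p,q)" by fastforce
    have "(\<Sum>l<m. x (h l) * tens (g (bas (fst (h l)))) (g (bas (snd (h l)))) pq)
        = (\<Sum>ij\<in>UNIV. x ij * tens (g (bas (fst ij))) (g (bas (snd ij))) pq)"
      using sum.reindex_bij_betw[OF h, of "\<lambda>ij. x ij * tens (g (bas (fst ij))) (g (bas (snd ij))) pq"]
      by (simp add: m_def atLeast0LessThan)
    then show "x pq = (\<Sum>l<m. x (h l) * tens (g (bas (fst (h l)))) (g (bas (snd (h l)))) pq)"
      using xe pq by simp
  qed
  moreover have "\<forall>l<m. g (bas (fst (h l))) \<in> B \<and> g (bas (snd (h l))) \<in> B" using gB by auto
  ultimately show ?thesis unfolding tensor_sq_def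
    by (intro CollectI exI[of _ m] exI[of _ "\<lambda>l. x (h l)"] exI[of _ "\<lambda>l. g (bas (fst (h l)))"]
        exI[of _ "\<lambda>l. g (bas (snd (h l)))"]) simp
qed

definition mm :: "('n::finite \<Rightarrow> 'n \<Rightarrow> 'n \<Rightarrow> complex) \<Rightarrow> ('n \<Rightarrow> complex) \<Rightarrow> ('n \<Rightarrow> complex) \<Rightarrow> 'n \<Rightarrow> complex" where
  "mm m f g q = (\<Sum>j\<in>UNIV. \<Sum>j'\<in>UNIV. f j * g j' * m j j' q)"

definition tm :: "('n::finite \<Rightarrow> 'n \<Rightarrow> 'n \<Rightarrow> complex) \<Rightarrow> ('n \<Rightarrow> 'n \<Rightarrow> complex) \<Rightarrow> ('n \<Rightarrow> 'n \<Rightarrow> complex) \<Rightarrow> 'n \<Rightarrow> 'n \<Rightarrow> complex" where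
  "tm m x y p q = (\<Sum>i\<in>UNIV. \<Sum>i'\<in>UNIV. m i i' p * mm m (x i) (y i') q)"

lemma sum_swap_mult_left:
  "(\<Sum>a\<in>A. g a * (\<Sum>i\<in>B. h a i)) = ((\<Sum>i\<in>B. \<Sum>a\<in>A. g a * h a i) :: complex)"
  unfolding sum_distrib_left by (rule sum.swap)

lemma mm_sum_left:
  "mm m (\<lambda>q. \<Sum>k\<in>K. f k * g k q) h q = (\<Sum>k\<in>K. f k * mm m (g k) h q)"
  by (simp add: mm_def sum_distrib_left sum_distrib_right mult_ac sum.swap[of _ K])

lemma mm_sum_right:
  "mm m h (\<lambda>q. \<Sum>k\<in>K. f k * g k q) q = (\<Sum>k\<in>K. f k * mm m h (g k) q)"
  by (simp add: mm_def sum_distrib_left sum_distrib_right mult_ac sum.swap[of _ K])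


lemma sum_out2: "(\<Sum>a\<in>UNIV. \<Sum>b\<in>UNIV. F a b) = (\<Sum>b\<in>UNIV. \<Sum>a\<in>UNIV. F a b)"
  by (rule sum.swap)
lemma sum_out3: "(\<Sum>a\<in>UNIV. \<Sum>b\<in>UNIV. \<Sum>c\<in>UNIV. F a b c) = (\<Sum>c\<in>UNIV. \<Sum>a\<in>UNIV. \<Sum>b\<in>UNIV. F a b c)"
  by (subst sum.swap) (rule sum.cong[OF refl], rule sum.swap)
lemma sum_out4: "(\<Sum>a\<in>UNIV. \<Sum>b\<in>UNIV. \<Sum>c\<in>UNIV. \<Sum>d\<in>UNIV. F a b c d) = (\<Sum>d\<in>UNIV. \<Sum>a\<in>UNIV. \<Sum>b\<in>UNIV. \<Sum>c\<in>UNIV. F a b c d)"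
proof -
  have "(\<Sum>a\<in>UNIV. \<Sum>b\<in>UNIV. \<Sum>c\<in>UNIV. \<Sum>d\<in>UNIV. F a b c d) = (\<Sum>a\<in>UNIV. \<Sum>d\<in>UNIV. \<Sum>b\<in>UNIV. \<Sum>c\<in>UNIV. F a b c d)"
    by (rule sum.cong[OF refl], rule sum_out3)
  also have "\<dots> = (\<Sum>d\<in>UNIV. \<Sum>a\<in>UNIV. \<Sum>b\<in>UNIV. \<Sum>c\<in>UNIV. F a b c d)" by (rule sum.swap)
  finally show ?thesis .
qed
lemma sum_out5: "(\<Sum>a\<in>UNIV. \<Sum>b\<in>UNIV. \<Sum>c\<in>UNIV. \<Sum>d\<in>UNIV. \<Sum>g\<in>UNIV. F a b c d g) = (\<Sum>g\<in>UNIV. \<Sum>a\<in>UNIV. \<Sum>b\<in>UNIV. \<Sum>c\<in>UNIV. \<Sum>d\<in>UNIV. F a b c d g)"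
proof -
  have "(\<Sum>a\<in>UNIV. \<Sum>b\<in>UNIV. \<Sum>c\<in>UNIV. \<Sum>d\<in>UNIV. \<Sum>g\<in>UNIV. F a b c d g) = (\<Sum>a\<in>UNIV. \<Sum>g\<in>UNIV. \<Sum>b\<in>UNIV. \<Sum>c\<in>UNIV. \<Sum>d\<in>UNIV. F a b c d g)"
    by (rule sum.cong[OF refl], rule sum_out4)
  also have "\<dots> = (\<Sum>g\<in>UNIV. \<Sum>a\<in>UNIV. \<Sum>b\<in>UNIV. \<Sum>c\<in>UNIV. \<Sum>d\<in>UNIV. F a b c d g)" by (rule sum.swap)
  finally show ?thesis .
qed
lemma sum_out6: "(\<Sum>a\<in>UNIV. \<Sum>b\<in>UNIV. \<Sum>c\<in>UNIV. \<Sum>d\<in>UNIV. \<Sum>g\<in>UNIV. \<Sum>h\<in>UNIV. F a b c d g h) = (\<Sum>h\<in>UNIV. \<Sum>a\<in>UNIV. \<Sum>b\<in>UNIV. \<Sum>c\<in>UNIV. \<Sum>d\<in>UNIV. \<Sum>g\<in>UNIV. F a b c d g h)"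
proof -
  have "(\<Sum>a\<in>UNIV. \<Sum>b\<in>UNIV. \<Sum>c\<in>UNIV. \<Sum>d\<in>UNIV. \<Sum>g\<in>UNIV. \<Sum>h\<in>UNIV. F a b c d g h) = (\<Sum>a\<in>UNIV. \<Sum>h\<in>UNIV. \<Sum>b\<in>UNIV. \<Sum>c\<in>UNIV. \<Sum>d\<in>UNIV. \<Sum>g\<in>UNIV. F a b c d g h)"
    by (rule sum.cong[OF refl], rule sum_out5)
  also have "\<dots> = (\<Sum>h\<in>UNIV. \<Sum>a\<in>UNIV. \<Sum>b\<in>UNIV. \<Sum>c\<in>UNIV. \<Sum>d\<in>UNIV. \<Sum>g\<in>UNIV. F a b c d g h)" by (rule sum.swap)
  finally show ?thesis .
qed

lemma sum_bas_r2: "(\<Sum>a\<in>UNIV. f a * bas a (x::'n::finite)) = (f x :: complex)"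
  by (simp add: bas_sym[of _ x] sum_bas_r)
lemma sum_bas_l2: "(\<Sum>a\<in>UNIV. bas a (x::'n::finite) * f a) = (f x :: complex)"
  by (simp add: bas_sym[of _ x] sum_bas_l)

lemma sum_out7: "(\<Sum>a\<in>UNIV. \<Sum>b\<in>UNIV. \<Sum>c\<in>UNIV. \<Sum>d\<in>UNIV. \<Sum>g\<in>UNIV. \<Sum>h\<in>UNIV. \<Sum>k\<in>UNIV. F a b c d g h k) = (\<Sum>k\<in>UNIV. \<Sum>a\<in>UNIV. \<Sum>b\<in>UNIV. \<Sum>c\<in>UNIV. \<Sum>d\<in>UNIV. \<Sum>g\<in>UNIV. \<Sum>h\<in>UNIV. F a b c d g h k)"
proof -
  have "(\<Sum>a\<in>UNIV. \<Sum>b\<in>UNIV. \<Sum>c\<in>UNIV. \<Sum>d\<in>UNIV. \<Sum>g\<in>UNIV. \<Sum>h\<in>UNIV. \<Sum>k\<in>UNIV. F a b c d g h k) = (\<Sum>a\<in>UNIV. \<Sum>k\<in>UNIV. \<Sum>b\<in>UNIV. \<Sum>c\<in>UNIV. \<Sum>d\<in>UNIV. \<Sum>g\<in>UNIV. \<Sum>h\<in>UNIV. F a b c d g h k)"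
    by (rule sum.cong[OF refl], rule sum_out6)
  also have "\<dots> = (\<Sum>k\<in>UNIV. \<Sum>a\<in>UNIV. \<Sum>b\<in>UNIV. \<Sum>c\<in>UNIV. \<Sum>d\<in>UNIV. \<Sum>g\<in>UNIV. \<Sum>h\<in>UNIV. F a b c d g h k)" by (rule sum.swap)
  finally show ?thesis .
qed
lemma sum_out8: "(\<Sum>a\<in>UNIV. \<Sum>b\<in>UNIV. \<Sum>c\<in>UNIV. \<Sum>d\<in>UNIV. \<Sum>g\<in>UNIV. \<Sum>h\<in>UNIV. \<Sum>k\<in>UNIV. \<Sum>l\<in>UNIV. F a b c d g h k l) = (\<Sum>l\<in>UNIV. \<Sum>a\<in>UNIV. \<Sum>b\<in>UNIV. \<Sum>c\<in>UNIV. \<Sum>d\<in>UNIV. \<Sum>g\<in>UNIV. \<Sum>h\<in>UNIV. \<Sum>k\<in>UNIV. F a b c d g h k l)"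
proof -
  have "(\<Sum>a\<in>UNIV. \<Sum>b\<in>UNIV. \<Sum>c\<in>UNIV. \<Sum>d\<in>UNIV. \<Sum>g\<in>UNIV. \<Sum>h\<in>UNIV. \<Sum>k\<in>UNIV. \<Sum>l\<in>UNIV. F a b c d g h k l) = (\<Sum>a\<in>UNIV. \<Sum>l\<in>UNIV. \<Sum>b\<in>UNIV. \<Sum>c\<in>UNIV. \<Sum>d\<in>UNIV. \<Sum>g\<in>UNIV. \<Sum>h\<in>UNIV. \<Sum>k\<in>UNIV. F a b c d g h k l)"
    by (rule sum.cong[OF refl], rule sum_out7)
  also have "\<dots> = (\<Sum>l\<in>UNIV. \<Sum>a\<in>UNIV. \<Sum>b\<in>UNIV. \<Sum>c\<in>UNIV. \<Sum>d\<in>UNIV. \<Sum>g\<in>UNIV. \<Sum>h\<in>UNIV. \<Sum>k\<in>UNIV. F a b c d g h k l)" by (rule sum.swap)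
  finally show ?thesis .
qed

lemma sum_bas_inner: "(\<Sum>y\<in>UNIV. \<Sum>a'\<in>UNIV. F y a' * bas (w::'n::finite) y) = (\<Sum>a'\<in>UNIV. (F w a' :: complex))"
proof -
  have "(\<Sum>y\<in>UNIV. \<Sum>a'\<in>UNIV. F y a' * bas w y) = (\<Sum>y\<in>UNIV. (\<Sum>a'\<in>UNIV. F y a') * bas w y)"
    by (simp add: sum_distrib_right)
  also have "\<dots> = (\<Sum>a'\<in>UNIV. F w a')" by (rule sum_bas_r)
  finally show ?thesis .
qed

locale hidx =
  fixes m :: "'n::finite \<Rightarrow> 'n \<Rightarrow> 'n \<Rightarrow> complex" and u :: "'n \<Rightarrow> complex"
    and c :: "'n \<Rightarrow> 'n \<Rightarrow> 'n \<Rightarrow> complex" and e :: "'n \<Rightarrow> complex"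
    and s :: "'n \<Rightarrow> 'n \<Rightarrow> complex"
  assumes assoc: "(\<Sum>p\<in>UNIV. m i j p * m p l q) = (\<Sum>p\<in>UNIV. m j l p * m i p q)"
  and unitl: "(\<Sum>i\<in>UNIV. u i * m i j k) = bas j k"
  and unitr: "(\<Sum>i\<in>UNIV. u i * m j i k) = bas j k"
  and coassoc: "(\<Sum>k\<in>UNIV. c t k l * c k i j) = (\<Sum>k\<in>UNIV. c t i k * c k j l)"
  and counitl: "(\<Sum>i\<in>UNIV. e i * c t i j) = bas t j"
  and counitr: "(\<Sum>j\<in>UNIV. c t i j * e j) = bas t i"
  and bialg: "(\<Sum>k\<in>UNIV. m a b k * c k p q) = tm m (c a) (c b) p q"
  and dunit: "(\<Sum>k\<in>UNIV. u k * c k i j) = u i * u j"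
  and emul: "(\<Sum>k\<in>UNIV. m a b k * e k) = e a * e b"
  and eunit: "(\<Sum>k\<in>UNIV. u k * e k) = 1"
  and antl: "(\<Sum>i\<in>UNIV. \<Sum>j\<in>UNIV. c t i j * (\<Sum>k\<in>UNIV. s i k * m k j q)) = e t * u q"
  and antr: "(\<Sum>i\<in>UNIV. \<Sum>j\<in>UNIV. c t i j * (\<Sum>k\<in>UNIV. s j k * m i k q)) = e t * u q"
begin

definition conv where
  "conv X Y t p q = (\<Sum>i\<in>UNIV. \<Sum>j\<in>UNIV. c t i j * tm m (X i) (Y j) p q)"
definition eta where "eta t p q = e t * (u p * u q)"
definition Ds where "Ds t p q = (\<Sum>k\<in>UNIV. s t k * c k p q)"
definition Rs where "Rs t p q = (\<Sum>i\<in>UNIV. \<Sum>j\<in>UNIV. c t i j * (s j p * s i q))"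

lemma tm_sum_left:
  "tm m (\<lambda>p q. \<Sum>k\<in>UNIV. f k * X k p q) y p q = (\<Sum>k\<in>UNIV. f k * tm m (X k) y p q)"
  apply (simp add: tm_def mm_sum_left sum_distrib_left)
  apply (rule trans[OF sum_out3], rule sum.cong[OF refl])
  apply (simp add: mult_ac)
  done

lemma tm_sum_right:
  "tm m y (\<lambda>p q. \<Sum>k\<in>UNIV. f k * X k p q) p q = (\<Sum>k\<in>UNIV. f k * tm m y (X k) p q)"
  apply (simp add: tm_def mm_sum_right sum_distrib_left)
  apply (rule trans[OF sum_out3], rule sum.cong[OF refl])
  apply (simp add: mult_ac)
  done

lemma mm_sum_left':
  "mm m (\<lambda>q. \<Sum>k\<in>K. G k q) h q = (\<Sum>k\<in>K. mm m (G k) h q)"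
  by (simp add: mm_def sum_distrib_left sum_distrib_right mult_ac sum.swap[of _ K])
lemma mm_sum_right':
  "mm m h (\<lambda>q. \<Sum>k\<in>K. G k q) q = (\<Sum>k\<in>K. mm m h (G k) q)"
  by (simp add: mm_def sum_distrib_left sum_distrib_right mult_ac sum.swap[of _ K])
lemma mm_scale_left: "mm m (\<lambda>q. a * G q) h q = a * mm m G h q"
  by (simp add: mm_def sum_distrib_left mult_ac)
lemma mm_scale_right: "mm m h (\<lambda>q. a * G q) q = a * mm m h G q"
  by (simp add: mm_def sum_distrib_left mult_ac)

lemma mm_assoc: "mm m (mm m f g) h q = mm m f (mm m g h) q"
proof -
  have "mm m (mm m f g) h q = (\<Sum>a\<in>UNIV. \<Sum>a'\<in>UNIV. (\<Sum>j\<in>UNIV. \<Sum>j'\<in>UNIV. f j * g j' * m j j' a) * h a' * m a a' q)"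
    by (simp add: mm_def)
  also have "\<dots> = (\<Sum>j\<in>UNIV. \<Sum>j'\<in>UNIV. \<Sum>a'\<in>UNIV. f j * g j' * h a' * (\<Sum>a\<in>UNIV. m j j' a * m a a' q))"
    apply (simp add: sum_distrib_left sum_distrib_right mult_ac)
    apply (rule trans[OF sum_out3], rule sum.cong[OF refl])
    apply (rule trans[OF sum_out3], rule sum.cong[OF refl])
    apply (rule trans[OF sum_out2], rule sum.cong[OF refl])
    apply (rule sum.cong[OF refl])
    apply (simp add: mult_ac)
    done
  also have "\<dots> = (\<Sum>j\<in>UNIV. \<Sum>j'\<in>UNIV. \<Sum>a'\<in>UNIV. f j * g j' * h a' * (\<Sum>b\<in>UNIV. m j' a' b * m j b q))"
    by (simp add: assoc)
  also have "\<dots> = mm m f (mm m g h) q"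
    apply (simp add: mm_def sum_distrib_left sum_distrib_right mult_ac)
    apply (rule sum.cong[OF refl])
    apply (rule trans[OF sum_out3], rule sum.cong[OF refl])
    apply (simp add: mult_ac)
    done
  finally show ?thesis .
qed

lemma tm_assoc: "tm m (tm m x y) z p q = tm m x (tm m y z) p q"
proof -
  have e1: "tm m x y a = (\<lambda>q. \<Sum>i\<in>UNIV. \<Sum>i'\<in>UNIV. m i i' a * mm m (x i) (y i') q)" for x y a
    by (simp add: tm_def fun_eq_iff)
  have "tm m (tm m x y) z p q = (\<Sum>a\<in>UNIV. \<Sum>a'\<in>UNIV. m a a' p * (\<Sum>i\<in>UNIV. \<Sum>i'\<in>UNIV. m i i' a * mm m (mm m (x i) (y i')) (z a') q))"
    by (simp add: tm_def[of m "tm m x y"] e1 mm_sum_left' mm_scale_left)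
  also have "\<dots> = (\<Sum>i\<in>UNIV. \<Sum>i'\<in>UNIV. \<Sum>a'\<in>UNIV. (\<Sum>a\<in>UNIV. m i i' a * m a a' p) * mm m (mm m (x i) (y i')) (z a') q)"
    apply (simp add: sum_distrib_left sum_distrib_right mult_ac)
    apply (rule trans[OF sum_out3], rule sum.cong[OF refl])
    apply (rule trans[OF sum_out3], rule sum.cong[OF refl])
    apply (rule trans[OF sum_out2], rule sum.cong[OF refl])
    apply (rule sum.cong[OF refl])
    apply (simp add: mult_ac)
    done
  also have "\<dots> = (\<Sum>i\<in>UNIV. \<Sum>i'\<in>UNIV. \<Sum>a'\<in>UNIV. (\<Sum>b\<in>UNIV. m i' a' b * m i b p) * mm m (x i) (mm m (y i') (z a')) q)"
    by (simp add: assoc[of _ _ _ p] mm_assoc)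
  also have "\<dots> = tm m x (tm m y z) p q"
    apply (simp add: tm_def[of m x] e1 mm_sum_right' mm_scale_right sum_distrib_left sum_distrib_right mult_ac)
    apply (rule sum.cong[OF refl])
    apply (rule trans[OF sum_out3], rule sum.cong[OF refl])
    apply (simp add: mult_ac)
    done
  finally show ?thesis .
qed

lemma tm_sum_left':
  "tm m (\<lambda>p q. \<Sum>k\<in>K. G k p q) y p q = (\<Sum>k\<in>K. tm m (G k) y p q)"
  by (simp add: tm_def mm_sum_left' sum_distrib_left sum.swap[of _ K])
lemma tm_sum_right':
  "tm m y (\<lambda>p q. \<Sum>k\<in>K. G k p q) p q = (\<Sum>k\<in>K. tm m y (G k) p q)"
  by (simp add: tm_def mm_sum_right' sum_distrib_left sum.swap[of _ K])
lemma tm_scale_left: "tm m (\<lambda>p q. a * G p q) y p q = a * tm m G y p q"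
  by (simp add: tm_def mm_scale_left sum_distrib_left mult_ac)
lemma tm_scale_right: "tm m y (\<lambda>p q. a * G p q) p q = a * tm m y G p q"
  by (simp add: tm_def mm_scale_right sum_distrib_left mult_ac)

lemma mm_unit_l: "mm m u g q = g q"
proof -
  have "mm m u g q = (\<Sum>j'\<in>UNIV. g j' * (\<Sum>j\<in>UNIV. u j * m j j' q))"
    unfolding mm_def sum_distrib_left
    by (subst sum.swap) (simp add: mult_ac)
  also have "\<dots> = g q" by (simp add: unitl sum_bas_r sum_bas_r2)
  finally show ?thesis .
qed

lemma mm_unit_r: "mm m g u q = g q"
proof -
  have "mm m g u q = (\<Sum>j\<in>UNIV. g j * (\<Sum>j'\<in>UNIV. u j' * m j j' q))"
    unfolding mm_def sum_distrib_left
    by (simp add: mult_ac)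
  also have "\<dots> = g q" by (simp add: unitr sum_bas_r sum_bas_r2)
  finally show ?thesis .
qed

lemma tm_unit_l: "tm m (\<lambda>i j. u i * u j) x p q = x p q"
proof -
  have "tm m (\<lambda>i j. u i * u j) x p q = (\<Sum>i'\<in>UNIV. (\<Sum>i\<in>UNIV. u i * m i i' p) * x i' q)"
    unfolding tm_def mm_scale_left mm_unit_l sum_distrib_right
    by (subst sum.swap) (simp add: mult_ac)
  also have "\<dots> = x p q" by (simp add: unitl sum_bas_l sum_bas_l2)
  finally show ?thesis .
qed

lemma tm_unit_r: "tm m x (\<lambda>i j. u i * u j) p q = x p q"
proof -
  have "tm m x (\<lambda>i j. u i * u j) p q = (\<Sum>i\<in>UNIV. (\<Sum>i'\<in>UNIV. u i' * m i i' p) * x i q)"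
    unfolding tm_def mm_scale_right mm_unit_r sum_distrib_right
    by (simp add: mult_ac)
  also have "\<dots> = x p q" by (simp add: unitr sum_bas_l sum_bas_l2)
  finally show ?thesis .
qed

lemma conv_assoc: "conv (conv X Y) Z t p q = conv X (conv Y Z) t p q"
proof -
  have e1: "conv X Y i = (\<lambda>p q. \<Sum>a\<in>UNIV. \<Sum>b\<in>UNIV. c i a b * tm m (X a) (Y b) p q)" for X Y i
    by (simp add: conv_def fun_eq_iff)
  have "conv (conv X Y) Z t p q = (\<Sum>i\<in>UNIV. \<Sum>j\<in>UNIV. c t i j * (\<Sum>a\<in>UNIV. \<Sum>b\<in>UNIV. c i a b * tm m (tm m (X a) (Y b)) (Z j) p q))"
    by (simp add: conv_def[of "conv X Y"] e1 tm_sum_left' tm_scale_left)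
  also have "\<dots> = (\<Sum>a\<in>UNIV. \<Sum>b\<in>UNIV. \<Sum>j\<in>UNIV. (\<Sum>i\<in>UNIV. c t i j * c i a b) * tm m (tm m (X a) (Y b)) (Z j) p q)"
    apply (simp add: sum_distrib_left sum_distrib_right mult_ac)
    apply (rule trans[OF sum_out3], rule sum.cong[OF refl])
    apply (rule trans[OF sum_out3], rule sum.cong[OF refl])
    apply (rule trans[OF sum_out2], rule sum.cong[OF refl])
    apply (rule sum.cong[OF refl])
    apply (simp add: mult_ac)
    done
  also have "\<dots> = (\<Sum>a\<in>UNIV. \<Sum>b\<in>UNIV. \<Sum>j\<in>UNIV. (\<Sum>w\<in>UNIV. c t a w * c w b j) * tm m (X a) (tm m (Y b) (Z j)) p q)"
    by (simp add: coassoc[of t] tm_assoc)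
  also have "\<dots> = conv X (conv Y Z) t p q"
    apply (simp add: conv_def[of X] e1 tm_sum_right' tm_scale_right sum_distrib_left sum_distrib_right mult_ac)
    apply (rule sum.cong[OF refl])
    apply (rule trans[OF sum_out3], rule sum.cong[OF refl])
    apply (simp add: mult_ac)
    done
  finally show ?thesis .
qed

lemma eta_lam: "eta i = (\<lambda>p q. e i * (u p * u q))" by (simp add: eta_def fun_eq_iff)

lemma conv_eta_l: "conv eta X t p q = X t p q"
proof -
  have "conv eta X t p q = (\<Sum>i\<in>UNIV. \<Sum>j\<in>UNIV. c t i j * (e i * X j p q))"
    by (simp add: conv_def eta_lam tm_scale_left tm_unit_l)
  also have "\<dots> = (\<Sum>j\<in>UNIV. (\<Sum>i\<in>UNIV. e i * c t i j) * X j p q)"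
    unfolding sum_distrib_right by (subst sum.swap) (simp add: mult_ac)
  also have "\<dots> = X t p q" by (simp add: counitl sum_bas_l)
  finally show ?thesis .
qed

lemma conv_eta_r: "conv X eta t p q = X t p q"
proof -
  have "conv X eta t p q = (\<Sum>i\<in>UNIV. \<Sum>j\<in>UNIV. c t i j * (e j * X i p q))"
    by (simp add: conv_def eta_lam tm_scale_right tm_unit_r)
  also have "\<dots> = (\<Sum>i\<in>UNIV. (\<Sum>j\<in>UNIV. c t i j * e j) * X i p q)"
    unfolding sum_distrib_right by (simp add: mult_ac)
  also have "\<dots> = X t p q" by (simp add: counitr sum_bas_l)
  finally show ?thesis .
qed

lemma Ds_lam: "Ds i = (\<lambda>p q. \<Sum>k\<in>UNIV. s i k * c k p q)" by (simp add: Ds_def fun_eq_iff)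
lemma Rs_lam: "Rs j = (\<lambda>p q. \<Sum>x\<in>UNIV. \<Sum>y\<in>UNIV. c j x y * (s y p * s x q))" by (simp add: Rs_def fun_eq_iff)

lemma conv_Ds_Dl: "conv Ds c t p q = eta t p q"
proof -
  have "conv Ds c t p q = (\<Sum>i\<in>UNIV. \<Sum>j\<in>UNIV. c t i j * (\<Sum>k\<in>UNIV. s i k * (\<Sum>r\<in>UNIV. m k j r * c r p q)))"
    by (simp add: conv_def Ds_lam tm_sum_left tm_scale_left bialg)
  also have "\<dots> = (\<Sum>r\<in>UNIV. (\<Sum>i\<in>UNIV. \<Sum>j\<in>UNIV. c t i j * (\<Sum>k\<in>UNIV. s i k * m k j r)) * c r p q)"
    apply (simp add: sum_distrib_left sum_distrib_right mult_ac)
    apply (rule trans[OF sum_out4], rule sum.cong[OF refl])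
    apply (simp add: mult_ac)
    done
  also have "\<dots> = e t * (\<Sum>r\<in>UNIV. u r * c r p q)"
    by (simp only: antl) (simp add: sum_distrib_left mult_ac)
  also have "\<dots> = eta t p q" by (simp add: dunit eta_def)
  finally show ?thesis .
qed

lemma conv_Dl_Rs: "conv c Rs t p q = eta t p q"
proof -
  have "conv c Rs t p q = (\<Sum>i\<in>UNIV. \<Sum>j\<in>UNIV. \<Sum>x\<in>UNIV. \<Sum>y\<in>UNIV. \<Sum>a\<in>UNIV. \<Sum>a'\<in>UNIV. \<Sum>b\<in>UNIV. \<Sum>b'\<in>UNIV. c t i j * c j x y * c i a b * s y a' * s x b' * m a a' p * m b b' q)"
    apply (simp add: conv_def Rs_lam tm_sum_right' tm_scale_right)
    by (simp add: tm_def mm_def sum_distrib_left sum_distrib_right mult_ac)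
  also have "\<dots> = (\<Sum>a\<in>UNIV. \<Sum>b\<in>UNIV. \<Sum>j\<in>UNIV. \<Sum>x\<in>UNIV. \<Sum>y\<in>UNIV. \<Sum>a'\<in>UNIV. \<Sum>b'\<in>UNIV. (\<Sum>i\<in>UNIV. c t i j * c i a b) * (c j x y * s y a' * s x b' * m a a' p * m b b' q))"
    apply (simp add: sum_distrib_left sum_distrib_right mult_ac)
    apply (rule trans[OF sum_out5], rule sum.cong[OF refl])
    apply (rule trans[OF sum_out6], rule sum.cong[OF refl])
    apply (rule trans[OF sum_out2], rule sum.cong[OF refl])
    apply (rule trans[OF sum_out2], rule sum.cong[OF refl])
    apply (rule trans[OF sum_out2], rule sum.cong[OF refl])
    apply (rule trans[OF sum_out2], rule sum.cong[OF refl])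
    apply (rule trans[OF sum_out2], rule sum.cong[OF refl])
    apply (rule sum.cong[OF refl])
    apply (simp add: mult_ac)
    done
  also have "\<dots> = (\<Sum>a\<in>UNIV. \<Sum>b\<in>UNIV. \<Sum>j\<in>UNIV. \<Sum>x\<in>UNIV. \<Sum>y\<in>UNIV. \<Sum>a'\<in>UNIV. \<Sum>b'\<in>UNIV. (\<Sum>w\<in>UNIV. c t a w * c w b j) * (c j x y * s y a' * s x b' * m a a' p * m b b' q))"
    by (simp only: coassoc)
  also have "\<dots> = (\<Sum>a\<in>UNIV. \<Sum>w\<in>UNIV. \<Sum>b\<in>UNIV. \<Sum>x\<in>UNIV. \<Sum>y\<in>UNIV. \<Sum>a'\<in>UNIV. \<Sum>b'\<in>UNIV. c t a w * (\<Sum>j\<in>UNIV. c w b j * c j x y) * (s y a' * s x b' * m a a' p * m b b' q))"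
    apply (simp add: sum_distrib_left sum_distrib_right mult_ac)
    apply (rule sum.cong[OF refl])
    apply (rule trans[OF sum_out7], rule sum.cong[OF refl])
    apply (rule sum.cong[OF refl])
    apply (rule trans[OF sum_out5[symmetric]], rule sum.cong[OF refl])
    apply (simp add: mult_ac)
    done
  also have "\<dots> = (\<Sum>a\<in>UNIV. \<Sum>w\<in>UNIV. \<Sum>b\<in>UNIV. \<Sum>x\<in>UNIV. \<Sum>y\<in>UNIV. \<Sum>a'\<in>UNIV. \<Sum>b'\<in>UNIV. c t a w * (\<Sum>z\<in>UNIV. c w z y * c z b x) * (s y a' * s x b' * m a a' p * m b b' q))"
    by (simp only: coassoc[symmetric])
  also have "\<dots> = (\<Sum>a\<in>UNIV. \<Sum>w\<in>UNIV. \<Sum>y\<in>UNIV. \<Sum>a'\<in>UNIV. \<Sum>z\<in>UNIV. c t a w * c w z y * s y a' * m a a' p * (\<Sum>b\<in>UNIV. \<Sum>x\<in>UNIV. c z b x * (\<Sum>b'\<in>UNIV. s x b' * m b b' q)))"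
    apply (simp add: sum_distrib_left sum_distrib_right mult_ac)
    apply (rule sum.cong[OF refl], rule sum.cong[OF refl])
    apply (rule trans[OF sum_out3], rule sum.cong[OF refl])
    apply (rule trans[OF sum_out3], rule sum.cong[OF refl])
    apply (rule trans[OF sum_out4], rule sum.cong[OF refl])
    apply (simp add: mult_ac)
    done
  also have "\<dots> = (\<Sum>a\<in>UNIV. \<Sum>w\<in>UNIV. \<Sum>y\<in>UNIV. \<Sum>a'\<in>UNIV. \<Sum>z\<in>UNIV. c t a w * c w z y * s y a' * m a a' p * (e z * u q))"
    by (simp only: antr)
  also have "\<dots> = (\<Sum>a\<in>UNIV. \<Sum>w\<in>UNIV. \<Sum>y\<in>UNIV. \<Sum>a'\<in>UNIV. c t a w * s y a' * m a a' p * u q * (\<Sum>z\<in>UNIV. e z * c w z y))"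
    by (simp add: sum_distrib_left mult_ac)
  also have "\<dots> = (\<Sum>a\<in>UNIV. \<Sum>w\<in>UNIV. \<Sum>a'\<in>UNIV. c t a w * s w a' * m a a' p * u q)"
    by (simp add: counitl sum_bas_inner)
  also have "\<dots> = u q * (\<Sum>a\<in>UNIV. \<Sum>w\<in>UNIV. c t a w * (\<Sum>a'\<in>UNIV. s w a' * m a a' p))"
    by (simp add: sum_distrib_left mult_ac)
  also have "\<dots> = eta t p q"
    by (simp only: antr) (simp add: eta_def mult_ac)
  finally show ?thesis .
qed

lemma Ds_eq_Rs: "Ds t p q = Rs t p q"
proof -
  have h1: "eta = conv c Rs" by (simp add: fun_eq_iff conv_Dl_Rs)
  have h2: "conv Ds c = eta" by (simp add: fun_eq_iff conv_Ds_Dl)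
  have "Ds t p q = conv Ds eta t p q" by (simp add: conv_eta_r)
  also have "\<dots> = conv (conv Ds c) Rs t p q" by (simp add: h1 conv_assoc)
  also have "\<dots> = Rs t p q" by (simp add: h2 conv_eta_l)
  finally show ?thesis .
qed

lemma anti_coalg: "(\<Sum>k\<in>UNIV. s t k * c k p q) = (\<Sum>i\<in>UNIV. \<Sum>j\<in>UNIV. c t i j * (s j p * s i q))"
  using Ds_eq_Rs by (simp add: Ds_def Rs_def)

lemma dual: "hidx (\<lambda>i j k. c k i j) e (\<lambda>k i j. m i j k) u (\<lambda>i j. s j i)"
proof (unfold_locales)
  fix i j l q
  show "(\<Sum>p\<in>UNIV. c p i j * c q p l) = (\<Sum>p\<in>UNIV. c p j l * c q i p)"
    using coassoc[of q l i j] by (simp add: mult_ac)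
next
  fix j k show "(\<Sum>i\<in>UNIV. e i * c k i j) = bas j k" using counitl[of k j] by (simp add: bas_sym)
next
  fix j k show "(\<Sum>i\<in>UNIV. e i * c k j i) = bas j k" using counitr[of k j] by (simp add: bas_sym mult_ac)
next
  fix t l i j show "(\<Sum>k\<in>UNIV. m k l t * m i j k) = (\<Sum>k\<in>UNIV. m i k t * m j l k)"
    using assoc[of i j l t] by (simp add: mult_ac)
next
  fix t j show "(\<Sum>i\<in>UNIV. u i * m i j t) = bas t j" using unitl[of j t] by (simp add: bas_sym)
next
  fix t i show "(\<Sum>j\<in>UNIV. m i j t * u j) = bas t i" using unitr[of i t] by (simp add: bas_sym mult_ac)
next
  fix a b p q
  show "(\<Sum>k\<in>UNIV. c k a b * m p q k) = tm (\<lambda>i j k. c k i j) (\<lambda>i j. m i j a) (\<lambda>i j. m i j b) p q"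
  proof -
    have "(\<Sum>k\<in>UNIV. c k a b * m p q k) = tm m (c p) (c q) a b" using bialg[of p q a b] by (simp add: mult_ac)
    also have "\<dots> = tm (\<lambda>i j k. c k i j) (\<lambda>i j. m i j a) (\<lambda>i j. m i j b) p q"
      apply (simp add: tm_def mm_def sum_distrib_left sum_distrib_right mult_ac)
      apply (rule sum.cong[OF refl])
      apply (rule trans[OF sum_out2], rule sum.cong[OF refl])
      apply (simp add: mult_ac)
      done
    finally show ?thesis .
  qed
next
  fix i j show "(\<Sum>k\<in>UNIV. e k * m i j k) = e i * e j" using emul[of i j] by (simp add: mult_ac)
next
  fix a b show "(\<Sum>k\<in>UNIV. c k a b * u k) = u a * u b" using dunit[of a b] by (simp add: mult_ac)
next
  show "(\<Sum>k\<in>UNIV. e k * u k) = 1" using eunit by (simp add: mult_ac)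
next
  fix t q
  show "(\<Sum>i\<in>UNIV. \<Sum>j\<in>UNIV. m i j t * (\<Sum>k\<in>UNIV. s k i * c q k j)) = u t * e q"
  proof -
    have "(\<Sum>i\<in>UNIV. \<Sum>j\<in>UNIV. m i j t * (\<Sum>k\<in>UNIV. s k i * c q k j)) = (\<Sum>n\<in>UNIV. \<Sum>j\<in>UNIV. \<Sum>i\<in>UNIV. s n i * (c q n j * m i j t))"
      apply (simp add: sum_distrib_left mult_ac)
      apply (rule trans[OF sum_out3], rule sum.cong[OF refl])
      apply (rule trans[OF sum_out2], rule sum.cong[OF refl])
      apply (simp add: mult_ac)
      done
    also have "\<dots> = e q * u t" using antl[of q t] by (simp add: sum_distrib_left mult_ac)
    finally show ?thesis by (simp add: mult_ac)
  qed
next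
  fix t q
  show "(\<Sum>i\<in>UNIV. \<Sum>j\<in>UNIV. m i j t * (\<Sum>k\<in>UNIV. s k j * c q i k)) = u t * e q"
  proof -
    have "(\<Sum>i\<in>UNIV. \<Sum>j\<in>UNIV. m i j t * (\<Sum>k\<in>UNIV. s k j * c q i k)) = (\<Sum>i\<in>UNIV. \<Sum>k\<in>UNIV. \<Sum>j\<in>UNIV. c q i k * (s k j * m i j t))"
      apply (simp add: sum_distrib_left mult_ac)
      apply (rule sum.cong[OF refl])
      apply (rule trans[OF sum_out2], rule sum.cong[OF refl])
      apply (simp add: mult_ac)
      done
    also have "\<dots> = e q * u t" using antr[of q t] by (simp add: sum_distrib_left mult_ac)
    finally show ?thesis by (simp add: mult_ac)
  qed
qed

lemma anti_alg: "(\<Sum>k\<in>UNIV. s k t * m p q k) = (\<Sum>i\<in>UNIV. \<Sum>j\<in>UNIV. m i j t * (s p j * s q i))"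
  using hidx.anti_coalg[OF dual] by simp

lemma S_unit: "(\<Sum>i\<in>UNIV. u i * s i q) = u q"
proof -
  have "u q = (\<Sum>t\<in>UNIV. u t * (\<Sum>i\<in>UNIV. \<Sum>j\<in>UNIV. c t i j * (\<Sum>k\<in>UNIV. s i k * m k j q)))"
  proof -
    have eq: "(\<Sum>t\<in>UNIV. u t * (e t * u q)) = (\<Sum>t\<in>UNIV. u t * e t) * u q" by (simp add: sum_distrib_right mult.assoc)
    show ?thesis by (simp only: antl eq eunit) simp
  qed
  also have "\<dots> = (\<Sum>i\<in>UNIV. \<Sum>j\<in>UNIV. (\<Sum>t\<in>UNIV. u t * c t i j) * (\<Sum>k\<in>UNIV. s i k * m k j q))"
    apply (simp add: sum_distrib_left sum_distrib_right mult_ac)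
    apply (rule trans[OF sum_out4[symmetric]])
    apply (rule sum.cong[OF refl], rule sum.cong[OF refl], rule sum.cong[OF refl], rule sum.cong[OF refl])
    apply (simp add: mult_ac)
    done
  also have "\<dots> = (\<Sum>i\<in>UNIV. \<Sum>k\<in>UNIV. u i * s i k * (\<Sum>j\<in>UNIV. u j * m k j q))"
    apply (simp add: dunit sum_distrib_left sum_distrib_right mult_ac)
    apply (rule sum.cong[OF refl])
    apply (rule trans[OF sum_out2], rule sum.cong[OF refl])
    apply (simp add: mult_ac)
    done
  also have "\<dots> = (\<Sum>i\<in>UNIV. u i * s i q)"
    by (simp add: unitr sum_bas_r2)
  finally show ?thesis by simp
qed

lemma antl2:
  assumes S2: "\<And>a b. (\<Sum>k\<in>UNIV. s a k * s k b) = bas a b"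
  shows "(\<Sum>i\<in>UNIV. \<Sum>j\<in>UNIV. c t i j * (\<Sum>k\<in>UNIV. s j k * m k i q)) = e t * u q"
proof -
  have inner: "(\<Sum>k\<in>UNIV. s j k * m k i q) = (\<Sum>r\<in>UNIV. s i r * (\<Sum>w\<in>UNIV. m r j w * s w q))" for i j
  proof -
    have "(\<Sum>k\<in>UNIV. s j k * m k i q) = (\<Sum>k\<in>UNIV. s j k * (\<Sum>l\<in>UNIV. bas i l * m k l q))"
      by (simp add: sum_bas_l)
    also have "\<dots> = (\<Sum>k\<in>UNIV. s j k * (\<Sum>l\<in>UNIV. (\<Sum>r\<in>UNIV. s i r * s r l) * m k l q))"
      by (simp add: S2)
    also have "\<dots> = (\<Sum>r\<in>UNIV. s i r * (\<Sum>k\<in>UNIV. \<Sum>l\<in>UNIV. m k l q * (s j k * s r l)))"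
      apply (simp add: sum_distrib_left sum_distrib_right mult_ac)
      apply (rule trans[OF sum_out3])
      apply (rule sum.cong[OF refl], rule sum.cong[OF refl], rule sum.cong[OF refl])
      apply (simp add: mult_ac)
      done
    also have "\<dots> = (\<Sum>r\<in>UNIV. s i r * (\<Sum>w\<in>UNIV. s w q * m r j w))"
      by (rule sum.cong[OF refl]) (subst anti_alg, simp add: mult_ac)
    finally show ?thesis by (simp add: mult_ac)
  qed
  have "(\<Sum>i\<in>UNIV. \<Sum>j\<in>UNIV. c t i j * (\<Sum>k\<in>UNIV. s j k * m k i q)) = (\<Sum>i\<in>UNIV. \<Sum>j\<in>UNIV. c t i j * (\<Sum>r\<in>UNIV. s i r * (\<Sum>w\<in>UNIV. m r j w * s w q)))"
    by (simp add: inner)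
  also have "\<dots> = (\<Sum>w\<in>UNIV. (\<Sum>i\<in>UNIV. \<Sum>j\<in>UNIV. c t i j * (\<Sum>r\<in>UNIV. s i r * m r j w)) * s w q)"
    apply (simp add: sum_distrib_left sum_distrib_right mult_ac)
    apply (rule trans[OF sum_out4])
    apply (rule sum.cong[OF refl], rule sum.cong[OF refl], rule sum.cong[OF refl], rule sum.cong[OF refl])
    apply (simp add: mult_ac)
    done
  also have "\<dots> = e t * (\<Sum>w\<in>UNIV. u w * s w q)"
    by (simp only: antl) (simp add: sum_distrib_left mult_ac)
  also have "\<dots> = e t * u q" by (simp add: S_unit)
  finally show ?thesis .
qed

end

lemma bas_mult_l: "bas x a * y = (if x = a then y else (0::complex))" by (simp add: bas_def)
lemma bas_mult_r: "y * bas x a = (if x = a then y else (0::complex))" by (simp add: bas_def)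

lemma amult_bas: "amult H (bas x) (bas y) = (\<lambda>k. hmul H x y k)"
  by (simp add: amult_def fun_eq_iff bas_mult_l bas_mult_r if_distrib[of "\<lambda>z. z * _"] cong: if_cong)

lemma aDelta_bas: "aDelta H (bas t) (i,j) = hcomul H t i j"
  by (simp add: aDelta_def bas_mult_l)
lemma aS_bas: "aS H (bas t) = hantip H t"
  by (simp add: aS_def bas_mult_l fun_eq_iff)
lemma aeps_bas: "aeps H (bas t) = hcounit H t"
  by (simp add: aeps_def bas_mult_l)

lemma sum_if_const: "(\<Sum>x\<in>A. if P then f x else (0::complex)) = (if P then (\<Sum>x\<in>A. f x) else 0)"
  by simp

lemmas bsimp = sum_if_const bas_mult_l bas_mult_r if_distrib[of "\<lambda>z. z * _"] if_distrib[of "\<lambda>z. _ * z"]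

lemma hopf_hidx:
  assumes H: "hopf_algebra H"
  shows "hidx (hmul H) (hunit H) (hcomul H) (hcounit H) (hantip H)"
proof -
  note ax = H[unfolded hopf_algebra_def]
  show ?thesis
  proof (unfold_locales)
    fix i j l q
    have "amult H (amult H (bas i) (bas j)) (bas l) q = amult H (bas i) (amult H (bas j) (bas l)) q"
      using ax by simp
    then show "(\<Sum>p\<in>UNIV. hmul H i j p * hmul H p l q) = (\<Sum>p\<in>UNIV. hmul H j l p * hmul H i p q)"
      by (simp add: amult_bas) (simp add: amult_def bsimp cong: if_cong)
  next
    fix j k
    have "amult H (aone H) (bas j) k = bas j k" using ax by simp
    then show "(\<Sum>i\<in>UNIV. hunit H i * hmul H i j k) = bas j k"
      by (simp add: amult_def aone_def bsimp cong: if_cong)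
  next
    fix j k
    have "amult H (bas j) (aone H) k = bas j k" using ax by simp
    then show "(\<Sum>i\<in>UNIV. hunit H i * hmul H j i k) = bas j k"
      by (simp add: amult_def aone_def bsimp mult_ac cong: if_cong)
  next
    fix t l i j
    have "Delta_id H (aDelta H (bas t)) (i,j,l) = id_Delta H (aDelta H (bas t)) (i,j,l)" using ax by simp
    then show "(\<Sum>k\<in>UNIV. hcomul H t k l * hcomul H k i j) = (\<Sum>k\<in>UNIV. hcomul H t i k * hcomul H k j l)"
      by (simp add: Delta_id_def id_Delta_def aDelta_bas)
  next
    fix t j
    have "eps_id H (aDelta H (bas t)) j = bas t j" using ax by simp
    then show "(\<Sum>i\<in>UNIV. hcounit H i * hcomul H t i j) = bas t j"
      by (simp add: eps_id_def aDelta_bas)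
  next
    fix t i
    have "id_eps H (aDelta H (bas t)) i = bas t i" using ax by simp
    then show "(\<Sum>j\<in>UNIV. hcomul H t i j * hcounit H j) = bas t i"
      by (simp add: id_eps_def aDelta_bas)
  next
    fix a b p q
    have "aDelta H (amult H (bas a) (bas b)) (p,q) = tmult H (aDelta H (bas a)) (aDelta H (bas b)) (p,q)"
      using ax by simp
    then have "(\<Sum>k\<in>UNIV. hmul H a b k * hcomul H k p q) =
      (\<Sum>i\<in>UNIV. \<Sum>j\<in>UNIV. \<Sum>i'\<in>UNIV. \<Sum>j'\<in>UNIV. hcomul H a i j * hcomul H b i' j' * hmul H i i' p * hmul H j j' q)"
      by (simp add: amult_bas aDelta_def tmult_def aDelta_bas sum_bas_l)
    also have "\<dots> = tm (hmul H) (hcomul H a) (hcomul H b) p q"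
      apply (simp add: tm_def mm_def sum_distrib_left mult_ac)
      apply (rule sum.cong[OF refl])
      apply (rule trans[OF sum_out2], rule sum.cong[OF refl])
      apply (simp add: mult_ac)
      done
    finally show "(\<Sum>k\<in>UNIV. hmul H a b k * hcomul H k p q) = tm (hmul H) (hcomul H a) (hcomul H b) p q" .
  next
    fix i j
    have "aDelta H (aone H) (i,j) = tens (aone H) (aone H) (i,j)" using ax by simp
    then show "(\<Sum>k\<in>UNIV. hunit H k * hcomul H k i j) = hunit H i * hunit H j"
      by (simp add: aDelta_def tens_def aone_def)
  next
    fix a b
    have "aeps H (amult H (bas a) (bas b)) = aeps H (bas a) * aeps H (bas b)" using ax by simp
    then show "(\<Sum>k\<in>UNIV. hmul H a b k * hcounit H k) = hcounit H a * hcounit H b"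
      by (simp add: amult_bas aeps_bas) (simp add: aeps_def)
  next
    have "aeps H (aone H) = 1" using ax by simp
    then show "(\<Sum>k\<in>UNIV. hunit H k * hcounit H k) = 1" by (simp add: aeps_def aone_def)
  next
    fix t q
    have "mult_S_id H (aDelta H (bas t)) q = aeps H (bas t) * aone H q" using ax by simp
    then show "(\<Sum>i\<in>UNIV. \<Sum>j\<in>UNIV. hcomul H t i j * (\<Sum>k\<in>UNIV. hantip H i k * hmul H k j q)) = hcounit H t * hunit H q"
      by (simp add: mult_S_id_def aDelta_bas aS_bas aeps_bas aone_def amult_def bsimp cong: if_cong)
  next
    fix t q
    have "mult_id_S H (aDelta H (bas t)) q = aeps H (bas t) * aone H q" using ax by simp
    then show "(\<Sum>i\<in>UNIV. \<Sum>j\<in>UNIV. hcomul H t i j * (\<Sum>k\<in>UNIV. hantip H j k * hmul H i k q)) = hcounit H t * hunit H q"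
      by (simp add: mult_id_S_def aDelta_bas aS_bas aeps_bas aone_def amult_def bsimp cong: if_cong)
  qed
qed

locale rctx =
  fixes H :: "('n::finite) hopf_data"
    and sc :: "complex \<Rightarrow> 'v \<Rightarrow> ('v::ab_group_add)"
    and rep :: "'n \<Rightarrow> 'v \<Rightarrow> 'v"
    and phi :: 'v
  assumes hopf: "hopf_algebra H"
    and S2: "\<forall>a. aS H (aS H a) = a"
    and isrep: "is_rep H sc rep"
begin

sublocale V: vector_space sc using isrep by (simp add: is_rep_def)
sublocale hidx "hmul H" "hunit H" "hcomul H" "hcounit H" "hantip H" by (rule hopf_hidx[OF hopf])

abbreviation "P \<equiv> Pi_rep sc rep"
abbreviation "m \<equiv> hmul H"
abbreviation "u \<equiv> hunit H"
abbreviation "c \<equiv> hcomul H"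
abbreviation "e \<equiv> hcounit H"
abbreviation "s \<equiv> hantip H"
definition "D a i j = aDelta H a (i,j)"

lemma D_eq: "D a i j = (\<Sum>k\<in>UNIV. a k * c k i j)" by (simp add: D_def aDelta_def)

lemma rep_lin: "module_hom sc sc (rep i)"
  using isrep by (simp add: is_rep_def module_hom_iff_linear)

lemma rep_sc: "rep i (sc a v) = sc a (rep i v)"
  using module_hom.scale[OF rep_lin] .
lemma rep_sum: "rep i (\<Sum>k\<in>K. G k) = (\<Sum>k\<in>K. rep i (G k))"
  using module_hom.sum[OF rep_lin] .

lemma P_lin_f: "P (\<lambda>j. \<Sum>k\<in>K. g k * F k j) v = (\<Sum>k\<in>K. sc (g k) (P (F k) v))"
  unfolding Pi_rep_def
  by (simp add: V.scale_sum_left V.scale_sum_right V.scale_scale sum.swap[of _ K])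

lemma P_sum_f: "P (\<lambda>j. \<Sum>k\<in>K. F k j) v = (\<Sum>k\<in>K. P (F k) v)"
  unfolding Pi_rep_def
  by (simp add: V.scale_sum_left sum.swap[of _ K])

lemma P_scale_f: "P (\<lambda>j. g * F j) v = sc g (P F v)"
  unfolding Pi_rep_def
  by (simp add: V.scale_sum_right V.scale_scale)

lemma P_sc_v: "P f (sc a v) = sc a (P f v)"
  unfolding Pi_rep_def
  by (simp add: rep_sc V.scale_sum_right V.scale_scale mult.commute)

lemma P_sum_v: "P f (\<Sum>k\<in>K. G k) = (\<Sum>k\<in>K. P f (G k))"
  unfolding Pi_rep_def
  by (simp add: rep_sum V.scale_sum_right sum.swap[of _ K])

lemma P_bas: "P (bas j) v = rep j v"
  unfolding Pi_rep_def
  by (simp add: bas_def if_distrib[of "\<lambda>z. sc z _"] cong: if_cong)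

lemma P_expand: "P f v = (\<Sum>j\<in>UNIV. sc (f j) (P (bas j) v))"
  by (simp only: P_bas) (simp add: Pi_rep_def)

lemma P_one: "P u v = v"
  using isrep by (simp add: is_rep_def aone_def)

lemma P_mul: "P (\<lambda>k. m x y k) v = P (bas x) (P (bas y) v)"
  using isrep amult_bas[of H x y] unfolding is_rep_def by metis

lemma S2_idx: "(\<Sum>k\<in>UNIV. s a k * s k b) = bas a b"
proof -
  have "aS H (aS H (bas a)) b = bas a b" using S2 by simp
  then show ?thesis by (simp add: aS_bas aS_def sum_bas_l)
qed

lemma D_row: "D (\<lambda>j'. D a x j') i j = (\<Sum>k\<in>UNIV. c k x i * D a k j)"
proof -
  have "D (\<lambda>j'. D a x j') i j = (\<Sum>l\<in>UNIV. a l * (\<Sum>k\<in>UNIV. c l x k * c k i j))"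
    apply (simp add: D_eq sum_distrib_left sum_distrib_right mult_ac)
    apply (rule trans[OF sum_out2], simp add: mult_ac)
    done
  also have "\<dots> = (\<Sum>l\<in>UNIV. a l * (\<Sum>k\<in>UNIV. c l k j * c k x i))"
    by (simp only: coassoc)
  also have "\<dots> = (\<Sum>k\<in>UNIV. c k x i * D a k j)"
    apply (simp add: D_eq sum_distrib_left sum_distrib_right mult_ac)
    apply (rule trans[OF sum_out2], simp add: mult_ac)
    done
  finally show ?thesis .
qed

lemma D_col: "D (\<lambda>i'. D a i' y) i j = (\<Sum>k\<in>UNIV. c k j y * D a i k)"
proof -
  have "D (\<lambda>i'. D a i' y) i j = (\<Sum>l\<in>UNIV. a l * (\<Sum>k\<in>UNIV. c l k y * c k i j))"
    apply (simp add: D_eq sum_distrib_left sum_distrib_right mult_ac)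
    apply (rule trans[OF sum_out2], simp add: mult_ac)
    done
  also have "\<dots> = (\<Sum>l\<in>UNIV. a l * (\<Sum>k\<in>UNIV. c l i k * c k j y))"
    by (simp only: coassoc)
  also have "\<dots> = (\<Sum>k\<in>UNIV. c k j y * D a i k)"
    apply (simp add: D_eq sum_distrib_left sum_distrib_right mult_ac)
    apply (rule trans[OF sum_out2], simp add: mult_ac)
    done
  finally show ?thesis .
qed

lemma D_counit_l: "(\<Sum>i\<in>UNIV. e i * D a i j) = a j"
proof -
  have "(\<Sum>i\<in>UNIV. e i * D a i j) = (\<Sum>k\<in>UNIV. a k * (\<Sum>i\<in>UNIV. e i * c k i j))"
    apply (simp add: D_eq sum_distrib_left sum_distrib_right mult_ac)
    apply (rule trans[OF sum_out2], simp add: mult_ac)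
    done
  also have "\<dots> = a j" by (simp add: counitl sum_bas_r2)
  finally show ?thesis .
qed

lemma D_counit_r: "(\<Sum>j\<in>UNIV. e j * D a i j) = a i"
proof -
  have "(\<Sum>j\<in>UNIV. e j * D a i j) = (\<Sum>k\<in>UNIV. a k * (\<Sum>j\<in>UNIV. c k i j * e j))"
    apply (simp add: D_eq sum_distrib_left sum_distrib_right mult_ac)
    apply (rule trans[OF sum_out2], simp add: mult_ac)
    done
  also have "\<dots> = a i" by (simp add: counitr sum_bas_r2)
  finally show ?thesis .
qed

lemma aS_eq: "aS H a k = (\<Sum>i\<in>UNIV. a i * s i k)" by (simp add: aS_def)
lemma aeps_eq: "aeps H a = (\<Sum>k\<in>UNIV. a k * e k)" by (simp add: aeps_def)

lemma D_anti: "D (aS H a) i j = (\<Sum>x\<in>UNIV. \<Sum>y\<in>UNIV. D a x y * (s y i * s x j))"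
proof -
  have "D (aS H a) i j = (\<Sum>t\<in>UNIV. a t * (\<Sum>k\<in>UNIV. s t k * c k i j))"
    apply (simp add: D_eq aS_eq sum_distrib_left sum_distrib_right mult_ac)
    apply (rule trans[OF sum_out2], simp add: mult_ac)
    done
  also have "\<dots> = (\<Sum>t\<in>UNIV. a t * (\<Sum>x\<in>UNIV. \<Sum>y\<in>UNIV. c t x y * (s y i * s x j)))"
    by (simp only: anti_coalg)
  also have "\<dots> = (\<Sum>x\<in>UNIV. \<Sum>y\<in>UNIV. D a x y * (s y i * s x j))"
    apply (simp add: D_eq sum_distrib_left sum_distrib_right mult_ac)
    apply (rule trans[OF sum_out3[symmetric]])
    apply (rule sum.cong[OF refl], rule sum.cong[OF refl], rule sum.cong[OF refl])
    apply (simp add: mult_ac)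
    done
  finally show ?thesis .
qed

lemma D_one: "D (aone H) i j = u i * u j"
  by (simp add: D_eq aone_def dunit)

lemma D_mult: "D (amult H a b) i j = (\<Sum>p\<in>UNIV. \<Sum>p'\<in>UNIV. m p p' i * (\<Sum>q\<in>UNIV. \<Sum>q'\<in>UNIV. D a p q * D b p' q' * m q q' j))"
proof -
  have "D (amult H a b) i j = (\<Sum>x\<in>UNIV. \<Sum>y\<in>UNIV. a x * b y * (\<Sum>k\<in>UNIV. m x y k * c k i j))"
    apply (simp add: D_eq amult_def sum_distrib_left sum_distrib_right mult_ac)
    apply (rule trans[OF sum_out3[symmetric]], (rule sum.cong[OF refl])+, simp add: mult_ac)
    done
  also have "\<dots> = (\<Sum>x\<in>UNIV. \<Sum>y\<in>UNIV. a x * b y * tm m (c x) (c y) i j)"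
    by (simp only: bialg)
  also have "\<dots> = (\<Sum>p\<in>UNIV. \<Sum>p'\<in>UNIV. m p p' i * (\<Sum>q\<in>UNIV. \<Sum>q'\<in>UNIV. D a p q * D b p' q' * m q q' j))"
    apply (simp add: tm_def mm_def D_eq sum_distrib_left sum_distrib_right mult_ac)
    apply (rule trans[OF sum_out3], rule sum.cong[OF refl])
    apply (rule trans[OF sum_out3], rule sum.cong[OF refl])
    apply (rule trans[OF sum_out3], rule sum.cong[OF refl])
    apply (rule trans[OF sum_out3], rule sum.cong[OF refl])
    apply (rule trans[OF sum_out2], (rule sum.cong[OF refl])+, simp add: mult_ac)
    done
  finally show ?thesis .
qed

lemma antl_D: "(\<Sum>i\<in>UNIV. \<Sum>j\<in>UNIV. D a i j * (\<Sum>k\<in>UNIV. s i k * m k j q)) = aeps H a * u q"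
proof -
  have "(\<Sum>i\<in>UNIV. \<Sum>j\<in>UNIV. D a i j * (\<Sum>k\<in>UNIV. s i k * m k j q)) = (\<Sum>t\<in>UNIV. a t * (\<Sum>i\<in>UNIV. \<Sum>j\<in>UNIV. c t i j * (\<Sum>k\<in>UNIV. s i k * m k j q)))"
    apply (simp add: D_eq sum_distrib_left sum_distrib_right mult_ac)
    apply (rule trans[OF sum_out4], (rule sum.cong[OF refl])+, simp add: mult_ac)
    done
  also have "\<dots> = aeps H a * u q" by (simp only: antl) (simp add: aeps_eq sum_distrib_right sum_distrib_left mult_ac)
  finally show ?thesis .
qed

lemma antl2_D: "(\<Sum>i\<in>UNIV. \<Sum>j\<in>UNIV. D a i j * (\<Sum>k\<in>UNIV. s j k * m k i q)) = aeps H a * u q"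
proof -
  have "(\<Sum>i\<in>UNIV. \<Sum>j\<in>UNIV. D a i j * (\<Sum>k\<in>UNIV. s j k * m k i q)) = (\<Sum>t\<in>UNIV. a t * (\<Sum>i\<in>UNIV. \<Sum>j\<in>UNIV. c t i j * (\<Sum>k\<in>UNIV. s j k * m k i q)))"
    apply (simp add: D_eq sum_distrib_left sum_distrib_right mult_ac)
    apply (rule trans[OF sum_out4], (rule sum.cong[OF refl])+, simp add: mult_ac)
    done
  also have "\<dots> = aeps H a * u q" by (simp only: antl2[OF S2_idx]) (simp add: aeps_eq sum_distrib_right sum_distrib_left mult_ac)
  finally show ?thesis .
qed

lemma P_row: "P (\<lambda>j. D a i j) phi = (\<Sum>j\<in>UNIV. sc (aDelta H a (i,j)) (P (bas j) phi))"
  by (subst P_expand) (simp add: D_def)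
lemma P_col: "P (\<lambda>i. D a i j) phi = (\<Sum>i\<in>UNIV. sc (aDelta H a (i,j)) (P (bas i) phi))"
  by (subst P_expand) (simp add: D_def)

lemma Tr_iff: "a \<in> T_r H sc rep phi \<longleftrightarrow> (\<forall>i. P (\<lambda>j. D a i j) phi = sc (a i) phi)"
  by (simp add: T_r_def fun_eq_iff P_row)
lemma Tl_iff: "a \<in> T_l H sc rep phi \<longleftrightarrow> (\<forall>j. P (\<lambda>i. D a i j) phi = sc (a j) phi)"
  by (simp add: T_l_def fun_eq_iff P_col)

lemma sc_sum_sc: "(\<Sum>k\<in>K. sc (f k) (sc (g k) phi)) = sc (\<Sum>k\<in>K. g k * f k) phi"
  by (simp add: V.scale_scale V.scale_sum_left mult_ac)

lemma K3r: assumes "a \<in> T_r H sc rep phi" shows "(\<lambda>j. D a x j) \<in> T_r H sc rep phi"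
proof -
  have h: "P (\<lambda>j. D a k j) phi = sc (a k) phi" for k using assms Tr_iff by blast
  show ?thesis unfolding Tr_iff
  proof
    fix i
    have "P (\<lambda>j. D (\<lambda>j'. D a x j') i j) phi = P (\<lambda>j. \<Sum>k\<in>UNIV. c k x i * D a k j) phi"
      by (simp only: D_row)
    also have "\<dots> = (\<Sum>k\<in>UNIV. sc (c k x i) (sc (a k) phi))" by (simp add: P_lin_f h)
    also have "\<dots> = sc (D a x i) phi" by (simp add: V.scale_sum_left D_eq mult_ac)
    finally show "P (\<lambda>j. D (\<lambda>j'. D a x j') i j) phi = sc (D a x i) phi" .
  qed
qed

lemma K3l: assumes "a \<in> T_l H sc rep phi" shows "(\<lambda>i. D a i y) \<in> T_l H sc rep phi"
proof -
  have h: "P (\<lambda>i. D a i k) phi = sc (a k) phi" for k using assms Tl_iff by blast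
  show ?thesis unfolding Tl_iff
  proof
    fix j
    have "P (\<lambda>i. D (\<lambda>i'. D a i' y) i j) phi = P (\<lambda>i. \<Sum>k\<in>UNIV. c k j y * D a i k) phi"
      by (simp only: D_col)
    also have "\<dots> = (\<Sum>k\<in>UNIV. sc (c k j y) (sc (a k) phi))" by (simp add: P_lin_f h)
    also have "\<dots> = sc (D a j y) phi" by (simp add: V.scale_sum_left D_eq mult_ac)
    finally show "P (\<lambda>i. D (\<lambda>i'. D a i' y) i j) phi = sc (D a j y) phi" .
  qed
qed

lemma K4r: assumes "a \<in> T_r H sc rep phi" shows "P a phi = sc (aeps H a) phi"
proof -
  have h: "P (\<lambda>j. D a k j) phi = sc (a k) phi" for k using assms Tr_iff by blast
  have "P a phi = P (\<lambda>j. \<Sum>i\<in>UNIV. e i * D a i j) phi" by (simp only: D_counit_l)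
  also have "\<dots> = (\<Sum>i\<in>UNIV. sc (e i) (sc (a i) phi))" by (simp add: P_lin_f h)
  also have "\<dots> = sc (aeps H a) phi" by (simp add: V.scale_sum_left aeps_eq mult_ac)
  finally show ?thesis .
qed

lemma K4l: assumes "a \<in> T_l H sc rep phi" shows "P a phi = sc (aeps H a) phi"
proof -
  have h: "P (\<lambda>i. D a i k) phi = sc (a k) phi" for k using assms Tl_iff by blast
  have "P a phi = P (\<lambda>i. \<Sum>j\<in>UNIV. e j * D a i j) phi" by (simp only: D_counit_r)
  also have "\<dots> = (\<Sum>j\<in>UNIV. sc (e j) (sc (a j) phi))" by (simp add: P_lin_f h)
  also have "\<dots> = sc (aeps H a) phi" by (simp add: V.scale_sum_left aeps_eq mult_ac)
  finally show ?thesis .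
qed

lemma K6r: assumes "a \<in> T_r H sc rep phi" shows "P (aS H a) phi = sc (aeps H a) phi"
proof -
  have h: "P (\<lambda>j. D a k j) phi = sc (a k) phi" for k using assms Tr_iff by blast
  have "P (aS H a) phi = P (\<lambda>k. \<Sum>i\<in>UNIV. a i * s i k) phi" by (simp add: aS_def)
  also have "\<dots> = (\<Sum>i\<in>UNIV. sc (a i) (\<Sum>k\<in>UNIV. sc (s i k) (P (bas k) phi)))"
    by (simp add: P_lin_f P_expand[of "s _"])
  also have "\<dots> = (\<Sum>i\<in>UNIV. \<Sum>k\<in>UNIV. sc (s i k) (P (bas k) (sc (a i) phi)))"
    by (simp add: P_sc_v V.scale_sum_right mult.commute)
  also have "\<dots> = (\<Sum>i\<in>UNIV. \<Sum>k\<in>UNIV. sc (s i k) (P (bas k) (\<Sum>j\<in>UNIV. sc (D a i j) (P (bas j) phi))))"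
    by (simp add: h[symmetric] P_expand[of "\<lambda>j. D a _ j"])
  also have "\<dots> = (\<Sum>i\<in>UNIV. \<Sum>j\<in>UNIV. \<Sum>k\<in>UNIV. sc (D a i j * s i k) (P (bas k) (P (bas j) phi)))"
    apply (simp add: P_sum_v P_sc_v V.scale_sum_right mult.commute)
    apply (rule sum.cong[OF refl], rule sum.swap)
    done
  also have "\<dots> = P (\<lambda>q. \<Sum>i\<in>UNIV. \<Sum>j\<in>UNIV. D a i j * (\<Sum>k\<in>UNIV. s i k * m k j q)) phi"
    by (simp add: sum_distrib_left P_sum_f P_scale_f P_mul mult.assoc)
  also have "\<dots> = P (\<lambda>q. aeps H a * u q) phi" by (simp only: antl_D)
  also have "\<dots> = sc (aeps H a) phi" by (simp add: P_scale_f P_one)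
  finally show ?thesis .
qed

lemma K6l: assumes "a \<in> T_l H sc rep phi" shows "P (aS H a) phi = sc (aeps H a) phi"
proof -
  have h: "P (\<lambda>i. D a i k) phi = sc (a k) phi" for k using assms Tl_iff by blast
  have "P (aS H a) phi = P (\<lambda>k. \<Sum>j\<in>UNIV. a j * s j k) phi" by (simp add: aS_def)
  also have "\<dots> = (\<Sum>j\<in>UNIV. sc (a j) (\<Sum>k\<in>UNIV. sc (s j k) (P (bas k) phi)))"
    by (simp add: P_lin_f P_expand[of "s _"])
  also have "\<dots> = (\<Sum>j\<in>UNIV. \<Sum>k\<in>UNIV. sc (s j k) (P (bas k) (sc (a j) phi)))"
    by (simp add: P_sc_v V.scale_sum_right mult.commute)
  also have "\<dots> = (\<Sum>j\<in>UNIV. \<Sum>k\<in>UNIV. sc (s j k) (P (bas k) (\<Sum>i\<in>UNIV. sc (D a i j) (P (bas i) phi))))"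
    by (simp add: h[symmetric] P_expand[of "\<lambda>i. D a i _"])
  also have "\<dots> = (\<Sum>j\<in>UNIV. \<Sum>i\<in>UNIV. \<Sum>k\<in>UNIV. sc (D a i j * s j k) (P (bas k) (P (bas i) phi)))"
    apply (simp add: P_sum_v P_sc_v V.scale_sum_right mult.commute)
    apply (rule sum.cong[OF refl], rule sum.swap)
    done
  also have "\<dots> = (\<Sum>i\<in>UNIV. \<Sum>j\<in>UNIV. \<Sum>k\<in>UNIV. sc (D a i j * s j k) (P (bas k) (P (bas i) phi)))"
    by (rule sum.swap)
  also have "\<dots> = P (\<lambda>q. \<Sum>i\<in>UNIV. \<Sum>j\<in>UNIV. D a i j * (\<Sum>k\<in>UNIV. s j k * m k i q)) phi"
    by (simp add: sum_distrib_left P_sum_f P_scale_f P_mul mult.assoc)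
  also have "\<dots> = P (\<lambda>q. aeps H a * u q) phi" by (simp only: antl2_D)
  also have "\<dots> = sc (aeps H a) phi" by (simp add: P_scale_f P_one)
  finally show ?thesis .
qed

lemma K7r: assumes "a \<in> T_r H sc rep phi" shows "aS H a \<in> T_l H sc rep phi"
  unfolding Tl_iff
proof
  fix j
  have row: "(\<lambda>y. D a x y) \<in> T_r H sc rep phi" for x using K3r[OF assms] .
  have fe: "(\<lambda>i. D (aS H a) i j) = (\<lambda>i. \<Sum>x\<in>UNIV. s x j * aS H (\<lambda>y. D a x y) i)"
    by (simp add: D_anti aS_eq sum_distrib_left mult_ac fun_eq_iff)
  have "P (\<lambda>i. D (aS H a) i j) phi = (\<Sum>x\<in>UNIV. sc (s x j) (P (aS H (\<lambda>y. D a x y)) phi))"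
    by (simp only: fe P_lin_f)
  also have "\<dots> = (\<Sum>x\<in>UNIV. sc (s x j) (sc (aeps H (\<lambda>y. D a x y)) phi))"
    by (simp add: K6r[OF row])
  also have "\<dots> = (\<Sum>x\<in>UNIV. sc (s x j) (sc (a x) phi))"
    using D_counit_r by (simp add: aeps_eq mult.commute)
  also have "\<dots> = sc (aS H a j) phi"
    by (simp add: V.scale_sum_left aS_eq mult_ac)
  finally show "P (\<lambda>i. D (aS H a) i j) phi = sc (aS H a j) phi" .
qed

lemma K7l: assumes "a \<in> T_l H sc rep phi" shows "aS H a \<in> T_r H sc rep phi"
  unfolding Tr_iff
proof
  fix i
  have col: "(\<lambda>x. D a x y) \<in> T_l H sc rep phi" for y using K3l[OF assms] .
  have fe: "(\<lambda>j. D (aS H a) i j) = (\<lambda>j. \<Sum>y\<in>UNIV. s y i * aS H (\<lambda>x. D a x y) j)"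
    apply (simp add: D_anti aS_eq sum_distrib_left mult_ac fun_eq_iff)
    apply (rule allI, rule trans[OF sum.swap], simp add: mult_ac)
    done
  have "P (\<lambda>j. D (aS H a) i j) phi = (\<Sum>y\<in>UNIV. sc (s y i) (P (aS H (\<lambda>x. D a x y)) phi))"
    by (simp only: fe P_lin_f)
  also have "\<dots> = (\<Sum>y\<in>UNIV. sc (s y i) (sc (aeps H (\<lambda>x. D a x y)) phi))"
    by (simp add: K6l[OF col])
  also have "\<dots> = (\<Sum>y\<in>UNIV. sc (s y i) (sc (a y) phi))"
    using D_counit_l by (simp add: aeps_eq mult.commute)
  also have "\<dots> = sc (aS H a i) phi"
    by (simp add: V.scale_sum_left aS_eq mult_ac)
  finally show "P (\<lambda>j. D (aS H a) i j) phi = sc (aS H a i) phi" .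
qed

lemma P_add_f: "P (\<lambda>j. f j + g j) v = P f v + P g v"
  unfolding Pi_rep_def by (simp add: V.scale_left_distrib sum.distrib)

lemma Tr_zero: "(\<lambda>_. 0) \<in> T_r H sc rep phi"
  by (simp add: Tr_iff D_eq Pi_rep_def)

lemma Tr_add: assumes "a \<in> T_r H sc rep phi" "b \<in> T_r H sc rep phi"
  shows "(\<lambda>i. a i + b i) \<in> T_r H sc rep phi"
proof -
  have "D (\<lambda>i. a i + b i) i j = D a i j + D b i j" for i j
    by (simp add: D_eq distrib_right sum.distrib)
  then show ?thesis using assms by (simp add: Tr_iff P_add_f V.scale_left_distrib)
qed

lemma Tr_scale: assumes "a \<in> T_r H sc rep phi" shows "(\<lambda>i. x * a i) \<in> T_r H sc rep phi"
proof -
  have "D (\<lambda>i. x * a i) i j = x * D a i j" for i j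
    by (simp add: D_eq sum_distrib_left mult_ac)
  then show ?thesis using assms by (simp add: Tr_iff P_scale_f)
qed

lemma Tr_one: "aone H \<in> T_r H sc rep phi"
proof -
  have "D (aone H) i = (\<lambda>j. u i * u j)" for i by (simp add: fun_eq_iff D_one)
  then show ?thesis unfolding Tr_iff by (simp add: P_scale_f P_one[unfolded] aone_def)
qed

lemma Tr_mult: assumes a: "a \<in> T_r H sc rep phi" and b: "b \<in> T_r H sc rep phi"
  shows "amult H a b \<in> T_r H sc rep phi"
  unfolding Tr_iff
proof
  fix i
  have ha: "P (\<lambda>j. D a k j) phi = sc (a k) phi" for k using a Tr_iff by blast
  have hb: "P (\<lambda>j. D b k j) phi = sc (b k) phi" for k using b Tr_iff by blast
  have inner: "(\<Sum>q\<in>UNIV. \<Sum>q'\<in>UNIV. sc (D a p q * D b p' q') (P (bas q) (P (bas q') phi))) = sc (a p * b p') phi" for p p'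
  proof -
    have "(\<Sum>q\<in>UNIV. \<Sum>q'\<in>UNIV. sc (D a p q * D b p' q') (P (bas q) (P (bas q') phi)))
        = (\<Sum>q\<in>UNIV. sc (D a p q) (P (bas q) (\<Sum>q'\<in>UNIV. sc (D b p' q') (P (bas q') phi))))"
      by (simp add: P_sum_v P_sc_v V.scale_sum_right)
    also have "\<dots> = (\<Sum>q\<in>UNIV. sc (D a p q) (P (bas q) (sc (b p') phi)))"
      by (simp add: hb[symmetric] P_expand[of "\<lambda>j. D b _ j"])
    also have "\<dots> = sc (b p') (\<Sum>q\<in>UNIV. sc (D a p q) (P (bas q) phi))"
      by (simp add: P_sc_v V.scale_sum_right mult.commute)
    also have "\<dots> = sc (b p') (sc (a p) phi)"
      by (simp add: ha[symmetric] P_expand[of "\<lambda>j. D a _ j"])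
    finally show ?thesis by (simp add: mult.commute)
  qed
  have "P (\<lambda>j. D (amult H a b) i j) phi
      = P (\<lambda>j. \<Sum>p\<in>UNIV. \<Sum>p'\<in>UNIV. m p p' i * (\<Sum>q\<in>UNIV. \<Sum>q'\<in>UNIV. D a p q * D b p' q' * m q q' j)) phi"
    by (simp only: D_mult)
  also have "\<dots> = (\<Sum>p\<in>UNIV. \<Sum>p'\<in>UNIV. sc (m p p' i) (\<Sum>q\<in>UNIV. \<Sum>q'\<in>UNIV. sc (D a p q * D b p' q') (P (bas q) (P (bas q') phi))))"
    by (simp add: P_sum_f P_scale_f P_mul)
  also have "\<dots> = (\<Sum>p\<in>UNIV. \<Sum>p'\<in>UNIV. sc (m p p' i) (sc (a p * b p') phi))"
    by (simp only: inner)
  also have "\<dots> = sc (amult H a b i) phi"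
    by (simp add: amult_def V.scale_sum_left mult_ac)
  finally show "P (\<lambda>j. D (amult H a b) i j) phi = sc (amult H a b i) phi" .
qed

lemma Tr_subalg: "subalgebra H (T_r H sc rep phi)"
  unfolding subalgebra_def using Tr_zero Tr_add Tr_scale Tr_one Tr_mult by blast

lemma T_sub:
  assumes hs: "hopf_subalgebra H B" and st: "stabilizes H sc rep phi B" and aB: "a \<in> B"
  shows "a \<in> T_r H sc rep phi \<and> a \<in> T_l H sc rep phi"
proof -
  have "aDelta H a \<in> tensor_sq B" using hs aB by (simp add: hopf_subalgebra_def)
  then obtain M cc f g where fg: "\<forall>l<(M::nat). f l \<in> B \<and> g l \<in> B"
    and dec: "aDelta H a = (\<lambda>p. \<Sum>l<M. cc l * tens (f l) (g l) p)"
    unfolding tensor_sq_def by blast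
  have Dd: "D a i j = (\<Sum>l<M. cc l * (f l i * g l j))" for i j
    by (simp add: D_def dec tens_def)
  have Pf: "P (f l) phi = sc (aeps H (f l)) phi" and Pg: "P (g l) phi = sc (aeps H (g l)) phi" if "l < M" for l
    using st fg that by (auto simp: stabilizes_def)
  have r: "a \<in> T_r H sc rep phi"
    unfolding Tr_iff
  proof
    fix i
    have "P (\<lambda>j. D a i j) phi = P (\<lambda>j. \<Sum>l<M. (cc l * f l i) * g l j) phi"
      by (simp add: Dd mult_ac)
    also have "\<dots> = (\<Sum>l<M. sc (cc l * f l i) (sc (aeps H (g l)) phi))"
      by (simp add: P_lin_f Pg)
    also have "\<dots> = sc (\<Sum>l<M. cc l * f l i * aeps H (g l)) phi"
      by (simp add: V.scale_sum_left mult_ac)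
    also have "(\<Sum>l<M. cc l * f l i * aeps H (g l)) = a i"
    proof -
      have "a i = (\<Sum>j\<in>UNIV. e j * D a i j)" by (simp add: D_counit_r)
      also have "\<dots> = (\<Sum>l<M. cc l * f l i * aeps H (g l))"
        by (simp add: Dd aeps_eq sum_distrib_left sum_distrib_right mult_ac sum.swap[of _ "{..<M}"])
      finally show ?thesis by simp
    qed
    finally show "P (\<lambda>j. D a i j) phi = sc (a i) phi" .
  qed
  have l: "a \<in> T_l H sc rep phi"
    unfolding Tl_iff
  proof
    fix j
    have "P (\<lambda>i. D a i j) phi = P (\<lambda>i. \<Sum>l<M. (cc l * g l j) * f l i) phi"
      by (simp add: Dd mult_ac)
    also have "\<dots> = (\<Sum>l<M. sc (cc l * g l j) (sc (aeps H (f l)) phi))"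
      by (simp add: P_lin_f Pf)
    also have "\<dots> = sc (\<Sum>l<M. cc l * g l j * aeps H (f l)) phi"
      by (simp add: V.scale_sum_left mult_ac)
    also have "(\<Sum>l<M. cc l * g l j * aeps H (f l)) = a j"
    proof -
      have "a j = (\<Sum>i\<in>UNIV. e i * D a i j)" by (simp add: D_counit_l)
      also have "\<dots> = (\<Sum>l<M. cc l * g l j * aeps H (f l))"
        by (simp add: Dd aeps_eq sum_distrib_left sum_distrib_right mult_ac sum.swap[of _ "{..<M}"])
      finally show ?thesis by simp
    qed
    finally show "P (\<lambda>i. D a i j) phi = sc (a j) phi" .
  qed
  show ?thesis using r l by blast
qed

lemma Tr_tensor:
  assumes eq: "T_r H sc rep phi = T_l H sc rep phi" and a: "a \<in> T_r H sc rep phi"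
  shows "aDelta H a \<in> tensor_sq (T_r H sc rep phi)"
proof (rule tensor_lemma)
  show "(\<lambda>_. 0) \<in> T_r H sc rep phi" by (rule Tr_zero)
  show "\<forall>a\<in>T_r H sc rep phi. \<forall>b\<in>T_r H sc rep phi. (\<lambda>i. a i + b i) \<in> T_r H sc rep phi"
    using Tr_add by blast
  show "\<forall>c. \<forall>a\<in>T_r H sc rep phi. (\<lambda>i. c * a i) \<in> T_r H sc rep phi"
    using Tr_scale by blast
  fix i show "(\<lambda>j. aDelta H a (i, j)) \<in> T_r H sc rep phi"
    using K3r[OF a, of i] by (simp add: D_def)
next
  fix j show "(\<lambda>i. aDelta H a (i, j)) \<in> T_r H sc rep phi"
    using K3l[of a j] a eq by (simp add: D_def)
qed

lemma main:
  assumes L: "is_largest_stab_hopf H sc rep phi T"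
  shows "(T_r H sc rep phi = T_l H sc rep phi \<longleftrightarrow> hopf_subalgebra H (T_r H sc rep phi))
       \<and> (hopf_subalgebra H (T_r H sc rep phi) \<longleftrightarrow> T_r H sc rep phi = T)
       \<and> (T_r H sc rep phi = T \<longleftrightarrow> T_l H sc rep phi \<subseteq> T_r H sc rep phi)"
proof -
  let ?R = "T_r H sc rep phi" and ?L = "T_l H sc rep phi"
  have hsT: "hopf_subalgebra H T" and stT: "stabilizes H sc rep phi T"
    and maxT: "\<And>B. hopf_subalgebra H B \<Longrightarrow> stabilizes H sc rep phi B \<Longrightarrow> B \<subseteq> T"
    using L by (auto simp: is_largest_stab_hopf_def)
  have TR: "T \<subseteq> ?R" and TL: "T \<subseteq> ?L" using T_sub[OF hsT stT] by auto
  have stR: "stabilizes H sc rep phi ?R" using K4r by (simp add: stabilizes_def)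
  have SS: "aS H (aS H a) = a" for a using S2 by simp
  have SR: "aS H a \<in> ?L" if "a \<in> ?R" for a using K7r that .
  have SL: "aS H a \<in> ?R" if "a \<in> ?L" for a using K7l that .
  have TS: "aS H a \<in> T" if "a \<in> T" for a using hsT that by (simp add: hopf_subalgebra_def)
  have i12: "hopf_subalgebra H ?R" if eq: "?R = ?L"
    unfolding hopf_subalgebra_def
    using Tr_subalg Tr_tensor[OF eq] SR eq by auto
  have i23: "?R = T" if "hopf_subalgebra H ?R"
    using maxT[OF that stR] TR by blast
  have i34: "?L \<subseteq> ?R" if eq: "?R = T"
  proof
    fix a assume "a \<in> ?L"
    then have "aS H a \<in> T" using SL eq by simp
    then have "aS H (aS H a) \<in> T" by (rule TS)
    then show "a \<in> ?R" using SS eq by simp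
  qed
  have i41: "?R = ?L" if sub: "?L \<subseteq> ?R"
  proof
    show "?L \<subseteq> ?R" by (rule sub)
    show "?R \<subseteq> ?L"
    proof
      fix a assume "a \<in> ?R"
      then have "aS H a \<in> ?R" using SR sub by blast
      then have "aS H (aS H a) \<in> ?L" by (rule SR)
      then show "a \<in> ?L" using SS by simp
    qed
  qed
  have i32: "hopf_subalgebra H ?R" if "?R = T" using hsT that by simp
  show ?thesis using i12 i23 i34 i41 i32 by blast
qed

end

theorem proposition1:
  fixes H :: "('n::finite) hopf_data"
    and sc :: "complex \<Rightarrow> 'v \<Rightarrow> ('v::ab_group_add)"
    and rep :: "'n \<Rightarrow> 'v \<Rightarrow> 'v"
    and phi :: 'v
    and T :: "('n \<Rightarrow> complex) set"
  assumes "hopf_algebra H"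
    and "\<forall>a. aS H (aS H a) = a"
    and "is_rep H sc rep"
    and "is_largest_stab_hopf H sc rep phi T"
  shows "(T_r H sc rep phi = T_l H sc rep phi \<longleftrightarrow> hopf_subalgebra H (T_r H sc rep phi))
       \<and> (hopf_subalgebra H (T_r H sc rep phi) \<longleftrightarrow> T_r H sc rep phi = T)
       \<and> (T_r H sc rep phi = T \<longleftrightarrow> T_l H sc rep phi \<subseteq> T_r H sc rep phi)"
proof -
  interpret R: rctx H sc rep phi using assms(1-3) by unfold_locales
  show ?thesis using R.main[OF assms(4)] .
qed

end
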